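(* Under the setting of the context, for every $T\ge0$, $$\sup_{0\le t\le T}\Bigl|\langle\bar M^{(m)}\rangle_t-m^{-2}\sum_{k=0}^{\lfloor m^2t\rfloor-1}\bar a(S_k/m)\Bigr|\longrightarrow0$$ in probability as $m\to+\infty$.
   Context: Let $d\ge1$, $(e_1,\dots,e_d)$ the canonical basis, $\mathcal V=\{\pm e_1,\dots,\pm e_d\}$. Let $E$ be a finite set and $P$ an irreducible and aperiodic stochastic matrix on $E$ with unique invariant probability $\mu$. For $k\in E$, $y\in\mathbb R^d$, $p(k,y,\cdot)$ is a probability on $\mathcal V$, with $y\mapsto p(k,y,u)$ twice continuously differentiable with bounded derivatives. Let $g(k,y)=\sum_uu\,p(k,y,u)$, assumed to satisfy $\sum_k\mu(k)g(k,y)=0$ for all $y$; $\alpha(i,y)=\sum_uuu^tp(i,y,u)$; $v(i,y)=\sum_{n\ge0}\sum_jP^n(i,j)g(j,y)$; $\bar a(y)=\sum_i\mu(i)[\alpha+gv^t+vg^t-2gg^t](i,y)$. For an integer $m\ge1$: $S_0=0$, $S_{n+1}=S_n+J_{n+1}$, $J_n\in\mathcal V$, and with $\mathcal F_n=\sigma(\xi_0,\dots,\xi_n,J_0,\dots,J_n)$, $\mathbb P(\xi_{n+1}=k,J_{n+1}=u\mid\mathcal F_n)=P(\xi_n,k)p(\xi_n,S_n/m,u)$. For $n\ge1$, $Y_n=J_n+v(\xi_n,S_n/m)-\mathbb E[J_n+v(\xi_n,S_n/m)\mid\mathcal F_{n-1}]$; $\bar M^{(m)}_t=m^{-1}\sum_{k=1}^{\lfloor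 m^2t\rfloor}Y_k$, a martingale with respect to $(\mathcal F_{\lfloor m^2t\rfloor})_t$, and $\langle\bar M^{(m)}\rangle$ its predictable bracket. *)

theory Defs
  imports "HOL-Probability.Probability"
begin

fun matpow :: "('e::finite \<Rightarrow> 'e \<Rightarrow> real) \<Rightarrow> nat \<Rightarrow> 'e \<Rightarrow> 'e \<Rightarrow> real" where
  "matpow P 0 i j = (if i = j then 1 else 0)"
| "matpow P (Suc n) i j = (\<Sum>k\<in>UNIV. matpow P n i k * P k j)"

definition stochastic :: "('e::finite \<Rightarrow> 'e \<Rightarrow> real) \<Rightarrow> bool" where
  "stochastic P \<longleftrightarrow> (\<forall>i j. 0 \<le> P i j) \<and> (\<forall>i. (\<Sum>j\<in>UNIV. P i j) = 1)"

definition irreducible_mat :: "('e::finite \<Rightarrow> 'e \<Rightarrow> real) \<Rightarrow> bool" where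
  "irreducible_mat P \<longleftrightarrow> (\<forall>i j. \<exists>n. 0 < matpow P n i j)"

definition aperiodic_mat :: "('e::finite \<Rightarrow> 'e \<Rightarrow> real) \<Rightarrow> bool" where
  "aperiodic_mat P \<longleftrightarrow> (\<forall>i. Gcd {n::nat. 0 < n \<and> 0 < matpow P n i i} = 1)"

definition invariant_prob :: "('e::finite \<Rightarrow> 'e \<Rightarrow> real) \<Rightarrow> ('e \<Rightarrow> real) \<Rightarrow> bool" where
  "invariant_prob P \<mu> \<longleftrightarrow> (\<forall>i. 0 \<le> \<mu> i) \<and> (\<Sum>i\<in>UNIV. \<mu> i) = 1
      \<and> (\<forall>j. (\<Sum>i\<in>UNIV. \<mu> i * P i j) = \<mu> j)"

definition Vsteps :: "(real^'d) set" where
  "Vsteps = {u. \<exists>a. u = axis a 1 \<or> u = - axis a 1}"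

definition outer :: "real^'d \<Rightarrow> real^'d \<Rightarrow> real^'d^'d" where
  "outer x y = (\<chi> a b. x $ a * y $ b)"

definition C2_bdd_deriv :: "(real^'d \<Rightarrow> real) \<Rightarrow> bool" where
  "C2_bdd_deriv f \<longleftrightarrow> (\<exists>Df D2f.
      (\<forall>y. (f has_derivative blinfun_apply (Df y)) (at y)) \<and>
      (\<forall>y. (Df has_derivative blinfun_apply (D2f y)) (at y)) \<and>
      continuous_on UNIV D2f \<and> bounded (range Df) \<and> bounded (range D2f))"

definition gdrift :: "('e \<Rightarrow> real^'d \<Rightarrow> real^'d \<Rightarrow> real) \<Rightarrow> 'e \<Rightarrow> real^'d \<Rightarrow> real^'d" where
  "gdrift p k y = (\<Sum>u\<in>Vsteps. p k y u *\<^sub>R u)"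

definition alpha :: "('e \<Rightarrow> real^'d \<Rightarrow> real^'d \<Rightarrow> real) \<Rightarrow> 'e \<Rightarrow> real^'d \<Rightarrow> real^'d^'d" where
  "alpha p i y = (\<Sum>u\<in>Vsteps. p i y u *\<^sub>R outer u u)"

definition vcorr :: "('e::finite \<Rightarrow> 'e \<Rightarrow> real) \<Rightarrow> ('e \<Rightarrow> real^'d \<Rightarrow> real^'d \<Rightarrow> real)
    \<Rightarrow> 'e \<Rightarrow> real^'d \<Rightarrow> real^'d" where
  "vcorr P p i y = (\<Sum>n. \<Sum>j\<in>UNIV. matpow P n i j *\<^sub>R gdrift p j y)"

definition abar :: "('e::finite \<Rightarrow> 'e \<Rightarrow> real) \<Rightarrow> ('e \<Rightarrow> real) \<Rightarrow> ('e \<Rightarrow> real^'d \<Rightarrow> real^'d \<Rightarrow> real)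
    \<Rightarrow> real^'d \<Rightarrow> real^'d^'d" where
  "abar P \<mu> p y = (\<Sum>i\<in>UNIV. \<mu> i *\<^sub>R
      (alpha p i y + outer (gdrift p i y) (vcorr P p i y) + outer (vcorr P p i y) (gdrift p i y)
       - 2 *\<^sub>R outer (gdrift p i y) (gdrift p i y)))"

definition Spos :: "(nat \<Rightarrow> 'w \<Rightarrow> real^'d) \<Rightarrow> nat \<Rightarrow> 'w \<Rightarrow> real^'d" where
  "Spos J n \<omega> = (\<Sum>i\<in>{1..n}. J i \<omega>)"

definition filt :: "'w measure \<Rightarrow> (nat \<Rightarrow> 'w \<Rightarrow> 'e) \<Rightarrow> (nat \<Rightarrow> 'w \<Rightarrow> real^'d) \<Rightarrow> nat \<Rightarrow> 'w measure" where
  "filt M \<xi> J n = sigma (space M)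
     ({\<xi> i -` A \<inter> space M | A i. i \<le> n} \<union> {J i -` B \<inter> space M | B i. i \<le> n \<and> B \<in> sets borel})"

definition vcond_exp :: "'w measure \<Rightarrow> 'w measure \<Rightarrow> ('w \<Rightarrow> real^'d) \<Rightarrow> 'w \<Rightarrow> real^'d" where
  "vcond_exp M F X \<omega> = (\<chi> a. real_cond_exp M F (\<lambda>w. X w $ a) \<omega>)"

definition Yinc :: "('e::finite \<Rightarrow> 'e \<Rightarrow> real) \<Rightarrow> ('e \<Rightarrow> real^'d \<Rightarrow> real^'d \<Rightarrow> real) \<Rightarrow> nat
    \<Rightarrow> 'w measure \<Rightarrow> (nat \<Rightarrow> 'w \<Rightarrow> 'e) \<Rightarrow> (nat \<Rightarrow> 'w \<Rightarrow> real^'d) \<Rightarrow> nat \<Rightarrow> 'w \<Rightarrow> real^'d" where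
  "Yinc P p m M \<xi> J n \<omega> =
     (let X = (\<lambda>w. J n w + vcorr P p (\<xi> n w) ((1 / real m) *\<^sub>R Spos J n w))
      in X \<omega> - vcond_exp M (filt M \<xi> J (n - 1)) X \<omega>)"

text \<open>Predictable bracket of \<open>M_t = m^{-1} \<Sum>_{k=1}^{\<lfloor>m^2 t\<rfloor>} Y_k\<close>:
  \<open>m^{-2} \<Sum>_{k=1}^{\<lfloor>m^2 t\<rfloor>} E[Y_k Y_k^t | F_{k-1}]\<close>.\<close>
definition bracket :: "('e::finite \<Rightarrow> 'e \<Rightarrow> real) \<Rightarrow> ('e \<Rightarrow> real^'d \<Rightarrow> real^'d \<Rightarrow> real) \<Rightarrow> nat
    \<Rightarrow> 'w measure \<Rightarrow> (nat \<Rightarrow> 'w \<Rightarrow> 'e) \<Rightarrow> (nat \<Rightarrow> 'w \<Rightarrow> real^'d) \<Rightarrow> real \<Rightarrow> 'w \<Rightarrow> real^'d^'d" where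
  "bracket P p m M \<xi> J t \<omega> = (1 / (real m)^2) *\<^sub>R
     (\<Sum>k\<in>{1..nat \<lfloor>(real m)^2 * t\<rfloor>}.
        (\<chi> a b. real_cond_exp M (filt M \<xi> J (k - 1))
                  (\<lambda>w. Yinc P p m M \<xi> J k w $ a * Yinc P p m M \<xi> J k w $ b) \<omega>))"

end

theory Submission
  imports Defs
begin


lemma numsemigroup:
  fixes S :: "nat set"
  assumes add: "\<And>a b. a \<in> S \<Longrightarrow> b \<in> S \<Longrightarrow> a + b \<in> S" and g: "Gcd S = 1"
  shows "\<exists>N. \<forall>n\<ge>N. n \<in> S"
proof -
  define S0 where "S0 = insert 0 S"
  have add0: "a \<in> S0 \<Longrightarrow> b \<in> S0 \<Longrightarrow> a + b \<in> S0" for a b using add by (auto simp: S0_def)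
  have mult0: "a \<in> S0 \<Longrightarrow> q * a \<in> S0" for a q
  proof (induction q)
    case 0 show ?case by (simp add: S0_def)
  next
    case (Suc q) then show ?case using add0[of a "q*a"] by simp
  qed
  have "S \<noteq> {}" using g by auto
  have "\<exists>s\<in>S. s > 0"
  proof (rule ccontr)
    assume "\<not> ?thesis"
    then have "S \<subseteq> {0}" by auto
    then have "S = {0}" using \<open>S \<noteq> {}\<close> by auto
    then show False using g by simp
  qed
  then obtain s0 where s0: "s0 \<in> S" "s0 > 0" by blast
  define G where "G = {int a - int b | a b. a \<in> S0 \<and> b \<in> S0}"
  have ex: "\<exists>k::nat. k > 0 \<and> int k \<in> G"
  proof -
    have "int s0 = int s0 - int 0" by simp
    then have "int s0 \<in> G" unfolding G_def S0_def using s0 by blast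
    then show ?thesis using s0 by blast
  qed
  define d where "d = (LEAST k::nat. k > 0 \<and> int k \<in> G)"
  have dG: "d > 0 \<and> int d \<in> G" unfolding d_def by (rule LeastI_ex[OF ex])
  have dmin: "\<And>k. k > 0 \<Longrightarrow> int k \<in> G \<Longrightarrow> d \<le> k" unfolding d_def by (simp add: Least_le)
  obtain A B where AB: "int d = int A - int B" "A \<in> S0" "B \<in> S0" using dG by (auto simp: G_def)
  have dvd: "d dvd s" if "s \<in> S" for s
  proof -
    define q where "q = s div d"
    define r where "r = s mod d"
    have sq: "s = q * d + r" by (simp add: q_def r_def)
    have "r < d" using dG by (simp add: r_def)
    have "q * A \<in> S0" "q * B \<in> S0" using AB mult0 by auto
    moreover have "s + q * B \<in> S0"
    proof -
      have "s \<in> S0" using that by (simp add: S0_def)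
      then show ?thesis using add0 \<open>q * B \<in> S0\<close> by blast
    qed
    moreover have "int r = int (s + q * B) - int (q * A)"
    proof -
      have e: "int s = int q * int d + int r" using sq by (metis of_nat_add of_nat_mult)
      show ?thesis using e AB(1) by (simp add: algebra_simps)
    qed
    ultimately have "int r \<in> G" unfolding G_def by blast
    then have "r = 0" using dmin \<open>r < d\<close> by (meson not_less not_gr_zero)
    then show ?thesis by (simp add: r_def mod_eq_0_iff_dvd)
  qed
  then have "d dvd Gcd S" by (simp add: Gcd_greatest)
  then have "d = 1" using g by simp
  then have AB1: "A = B + 1" using AB(1) by linarith
  show ?thesis
  proof (cases "B = 0")
    case True
    then have "1 \<in> S0" using AB AB1 by simp
    then have "n \<in> S" if "n \<ge> 1" for n using mult0[of 1 n] that by (auto simp: S0_def)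
    then show ?thesis by blast
  next
    case False
    have "n \<in> S" if "n \<ge> B * B" for n
    proof -
      define q where "q = n div B"
      define r where "r = n mod B"
      have "r < B" using False by (simp add: r_def)
      have "q \<ge> B"
      proof -
        have "B * B div B \<le> n div B" by (rule div_le_mono[OF that])
        then show ?thesis using False by (simp add: q_def)
      qed
      have n_eq: "n = (q - r) * B + r * (B + 1)"
      proof -
        have "n = q * B + r" by (simp add: q_def r_def)
        also have "\<dots> = (q - r) * B + r * (B + 1)" using \<open>q \<ge> B\<close> \<open>r < B\<close>
        proof -
          obtain t where "q = r + t" using \<open>q \<ge> B\<close> \<open>r < B\<close> by (metis less_imp_le_nat le_Suc_ex order.trans)
          then show ?thesis by (simp add: algebra_simps)
        qed
        finally show ?thesis .
      qed
      have "(q - r) * B \<in> S0" by (rule mult0[OF AB(3)])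
      moreover have "r * (B + 1) \<in> S0" using mult0[of "B+1" r] AB(2) AB1 by simp
      ultimately have "n \<in> S0" unfolding n_eq by (rule add0)
      moreover have "n \<noteq> 0"
      proof -
        have "B * B > 0" using False by simp
        then show ?thesis using that by linarith
      qed
      ultimately show ?thesis by (simp add: S0_def)
    qed
    then show ?thesis by blast
  qed
qed

lemma matpow_add: "matpow P (a + b) i j = (\<Sum>k\<in>UNIV. matpow P a i k * matpow P b k j)"
proof (induction b arbitrary: j)
  case 0
  then show ?case by (simp add: if_distrib cong: if_cong)
next
  case (Suc b)
  have "matpow P (a + Suc b) i j = (\<Sum>l\<in>UNIV. matpow P (a + b) i l * P l j)" by simp
  also have "\<dots> = (\<Sum>l\<in>UNIV. \<Sum>k\<in>UNIV. matpow P a i k * (matpow P b k l * P l j))"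
    by (simp add: Suc sum_distrib_right mult.assoc)
  also have "\<dots> = (\<Sum>k\<in>UNIV. \<Sum>l\<in>UNIV. matpow P a i k * (matpow P b k l * P l j))"
    by (rule sum.swap)
  also have "\<dots> = (\<Sum>k\<in>UNIV. matpow P a i k * matpow P (Suc b) k j)"
    by (simp add: sum_distrib_left)
  finally show ?case .
qed

lemma matpow_0_left: "(\<Sum>k\<in>UNIV. matpow P 0 i k * f k) = f i"
proof -
  have "(\<Sum>k\<in>UNIV. matpow P 0 i k * f k) = (\<Sum>k\<in>UNIV. if i = k then f k else 0)"
    by (rule sum.cong) auto
  then show ?thesis by simp
qed

lemma matpow_0_right: "(\<Sum>k\<in>UNIV. f k * matpow P 0 k j) = f j"
proof -
  have "(\<Sum>k\<in>UNIV. f k * matpow P 0 k j) = (\<Sum>k\<in>UNIV. if k = j then f k else 0)"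
    by (rule sum.cong) auto
  then show ?thesis by simp
qed

lemma matpow_1: "matpow P (Suc 0) i j = P i j"
  by (simp only: matpow.simps(2) matpow_0_left)

lemma matpow_Suc_left: "matpow P (Suc n) i j = (\<Sum>k\<in>UNIV. P i k * matpow P n k j)"
  using matpow_add[of P "Suc 0" n i j] by (simp only: matpow_1 add_Suc add_0)

locale mchain =
  fixes P :: "'e::finite \<Rightarrow> 'e \<Rightarrow> real" and \<mu> :: "'e \<Rightarrow> real"
  assumes stoch: "stochastic P" and irr: "irreducible_mat P" and aper: "aperiodic_mat P"
    and inv: "invariant_prob P \<mu>"
begin

lemma P_nonneg: "0 \<le> P i j" using stoch by (simp add: stochastic_def)
lemma P_rowsum: "(\<Sum>j\<in>UNIV. P i j) = 1" using stoch by (simp add: stochastic_def)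
lemma mu_nonneg: "0 \<le> \<mu> i" using inv by (simp add: invariant_prob_def)
lemma mu_sum: "(\<Sum>i\<in>UNIV. \<mu> i) = 1" using inv by (simp add: invariant_prob_def)
lemma mu_inv: "(\<Sum>i\<in>UNIV. \<mu> i * P i j) = \<mu> j" using inv by (simp add: invariant_prob_def)
lemma mu_le1: "\<mu> i \<le> 1"
proof -
  have "\<mu> i \<le> (\<Sum>i\<in>UNIV. \<mu> i)" by (rule member_le_sum) (auto simp: mu_nonneg)
  then show ?thesis by (simp add: mu_sum)
qed

lemma matpow_nonneg: "0 \<le> matpow P n i j"
  by (induction n arbitrary: j) (auto intro!: sum_nonneg mult_nonneg_nonneg P_nonneg)

lemma matpow_rowsum: "(\<Sum>j\<in>UNIV. matpow P n i j) = 1"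
proof (induction n)
  case 0 then show ?case by simp
next
  case (Suc n)
  have "(\<Sum>j\<in>UNIV. matpow P (Suc n) i j) = (\<Sum>k\<in>UNIV. \<Sum>j\<in>UNIV. matpow P n i k * P k j)"
    unfolding matpow.simps by (rule sum.swap)
  also have "\<dots> = (\<Sum>k\<in>UNIV. matpow P n i k)" by (simp add: sum_distrib_left[symmetric] P_rowsum)
  finally show ?case using Suc by simp
qed

lemma matpow_le1: "matpow P n i j \<le> 1"
proof -
  have "matpow P n i j \<le> (\<Sum>j\<in>UNIV. matpow P n i j)" by (rule member_le_sum) (auto simp: matpow_nonneg)
  then show ?thesis by (simp add: matpow_rowsum)
qed

lemma mu_matpow: "(\<Sum>i\<in>UNIV. \<mu> i * matpow P n i j) = \<mu> j"
proof (induction n arbitrary: j)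
  case 0 then show ?case by (simp add: if_distrib cong: if_cong)
next
  case (Suc n)
  have "(\<Sum>i\<in>UNIV. \<mu> i * matpow P (Suc n) i j) = (\<Sum>k\<in>UNIV. (\<Sum>i\<in>UNIV. \<mu> i * matpow P n i k) * P k j)"
  proof -
    have "(\<Sum>i\<in>UNIV. \<mu> i * matpow P (Suc n) i j) = (\<Sum>i\<in>UNIV. \<Sum>k\<in>UNIV. \<mu> i * matpow P n i k * P k j)"
      by (simp add: sum_distrib_left mult.assoc)
    also have "\<dots> = (\<Sum>k\<in>UNIV. \<Sum>i\<in>UNIV. \<mu> i * matpow P n i k * P k j)" by (rule sum.swap)
    also have "\<dots> = (\<Sum>k\<in>UNIV. (\<Sum>i\<in>UNIV. \<mu> i * matpow P n i k) * P k j)"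
      by (simp add: sum_distrib_right)
    finally show ?thesis .
  qed
  also have "\<dots> = \<mu> j" by (simp add: Suc mu_inv)
  finally show ?case .
qed

lemma matpow_ge_prod: "matpow P a i k * matpow P b k j \<le> matpow P (a + b) i j"
  unfolding matpow_add by (rule member_le_sum) (auto intro: mult_nonneg_nonneg matpow_nonneg)

lemma eventually_diag: "\<exists>N. \<forall>n\<ge>N. 0 < matpow P n i i"
proof -
  define S where "S = {n. 0 < n \<and> 0 < matpow P n i i}"
  have "a + b \<in> S" if "a \<in> S" "b \<in> S" for a b
  proof -
    have "0 < matpow P a i i * matpow P b i i" using that by (simp add: S_def)
    also have "\<dots> \<le> matpow P (a + b) i i" by (rule matpow_ge_prod)
    finally show ?thesis using that by (simp add: S_def)
  qed
  moreover have "Gcd S = 1" using aper by (simp add: aperiodic_mat_def S_def)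
  ultimately obtain N where "\<forall>n\<ge>N. n \<in> S" using numsemigroup by blast
  then show ?thesis by (auto simp: S_def)
qed

lemma pos_power: "\<exists>N\<ge>1. \<forall>i j. 0 < matpow P N i j"
proof -
  obtain Nd where Nd: "\<And>i n. Nd i \<le> n \<Longrightarrow> 0 < matpow P n i i"
    using eventually_diag by metis
  obtain r where r: "\<And>i j. 0 < matpow P (r i j) i j"
    using irr unfolding irreducible_mat_def by metis
  define N where "N = Suc (Max (range Nd) + Max (range (case_prod r)))"
  have "0 < matpow P N i j" for i j
  proof -
    have "Nd i \<le> Max (range Nd)" by (rule Max_ge) auto
    moreover have "r i j \<le> Max (range (case_prod r))" by (rule Max_ge) auto
    ultimately have le: "Nd i \<le> N - r i j" and le2: "r i j \<le> N" unfolding N_def by linarith+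
    have "0 < matpow P (N - r i j) i i * matpow P (r i j) i j"
      using Nd[OF le] r by simp
    also have "\<dots> \<le> matpow P (N - r i j + r i j) i j" by (rule matpow_ge_prod)
    finally show ?thesis using le2 by simp
  qed
  then show ?thesis by (intro exI[of _ N]) (auto simp: N_def)
qed

definition Dv :: "nat \<Rightarrow> 'e \<Rightarrow> real" where
  "Dv n i = (\<Sum>j\<in>UNIV. \<bar>matpow P n i j - \<mu> j\<bar>)"

lemma Dv_nonneg: "0 \<le> Dv n i" by (simp add: Dv_def sum_nonneg)

lemma Dv_le2: "Dv n i \<le> 2"
proof -
  have "Dv n i \<le> (\<Sum>j\<in>UNIV. matpow P n i j + \<mu> j)"
    unfolding Dv_def by (rule sum_mono) (use matpow_nonneg mu_nonneg in \<open>auto simp: abs_le_iff\<close>)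
  also have "\<dots> = 2" by (simp add: sum.distrib matpow_rowsum mu_sum)
  finally show ?thesis .
qed

lemma Dv_contract:
  assumes c: "\<And>k. Dv n k \<le> c" and Q: "\<And>i j. \<delta> \<le> matpow P N i j" and d0: "0 \<le> \<delta>"
  shows "Dv (N + n) i \<le> (1 - \<delta>) * c"
proof -
  define w where "w k = matpow P N i k - \<delta> * \<mu> k" for k
  have w0: "0 \<le> w k" for k
  proof -
    have "\<delta> * \<mu> k \<le> \<delta> * 1" using d0 mu_le1 by (intro mult_left_mono) auto
    then show ?thesis using Q[of i k] by (simp add: w_def)
  qed
  have wsum: "(\<Sum>k\<in>UNIV. w k) = 1 - \<delta>"
    by (simp add: w_def sum_subtractf matpow_rowsum sum_distrib_left[symmetric] mu_sum)
  have e: "matpow P (N + n) i j - \<mu> j = (\<Sum>k\<in>UNIV. w k * (matpow P n k j - \<mu> j))" for j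
  proof -
    have "(\<Sum>k\<in>UNIV. w k * (matpow P n k j - \<mu> j))
        = (\<Sum>k\<in>UNIV. matpow P N i k * matpow P n k j) - (\<Sum>k\<in>UNIV. matpow P N i k) * \<mu> j
          - \<delta> * (\<Sum>k\<in>UNIV. \<mu> k * matpow P n k j) + \<delta> * (\<Sum>k\<in>UNIV. \<mu> k) * \<mu> j"
      by (simp add: w_def algebra_simps sum.distrib sum_subtractf sum_distrib_left sum_distrib_right)
    also have "\<dots> = matpow P (N + n) i j - \<mu> j"
      by (simp add: matpow_add[symmetric] matpow_rowsum mu_matpow mu_sum)
    finally show ?thesis by simp
  qed
  have "Dv (N + n) i \<le> (\<Sum>j\<in>UNIV. \<Sum>k\<in>UNIV. w k * \<bar>matpow P n k j - \<mu> j\<bar>)"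
    unfolding Dv_def e
  proof (rule sum_mono)
    fix j
    show "\<bar>\<Sum>k\<in>UNIV. w k * (matpow P n k j - \<mu> j)\<bar> \<le> (\<Sum>k\<in>UNIV. w k * \<bar>matpow P n k j - \<mu> j\<bar>)"
      by (rule order.trans[OF sum_abs]) (simp add: abs_mult w0)
  qed
  also have "\<dots> = (\<Sum>k\<in>UNIV. \<Sum>j\<in>UNIV. w k * \<bar>matpow P n k j - \<mu> j\<bar>)"
    by (rule sum.swap)
  also have "\<dots> = (\<Sum>k\<in>UNIV. w k * Dv n k)"
    by (simp add: Dv_def sum_distrib_left)
  also have "\<dots> \<le> (\<Sum>k\<in>UNIV. w k * c)"
    by (rule sum_mono) (simp add: mult_left_mono c w0)
  also have "\<dots> = (1 - \<delta>) * c" by (simp add: sum_distrib_right[symmetric] wsum)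
  finally show ?thesis .
qed

end


lemma pow_div_le:
  fixes r :: real
  assumes "0 < r" "r < 1" "N \<ge> 1"
  shows "r ^ (n div N) \<le> (r powr (1 / real N)) ^ n / r"
proof -
  have a: "(r powr (1 / real N)) ^ n = r powr (real n / real N)"
    using assms by (simp add: powr_realpow[symmetric] powr_powr)
  have b: "r ^ (n div N) * r = r powr (real (n div N) + 1)"
    using assms by (simp add: powr_add powr_realpow)
  have c: "real n / real N \<le> real (n div N) + 1"
  proof -
    have e: "n = n div N * N + n mod N" by simp
    have "n mod N < N" using assms by simp
    moreover have "(n div N + 1) * N = n div N * N + N" by (simp add: algebra_simps)
    ultimately have "n < (n div N + 1) * N" using e by linarith
    then have "real n < real ((n div N + 1) * N)" by (simp only: of_nat_less_iff)
    then have "real n < (real (n div N) + 1) * real N" by (simp add: algebra_simps)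
    then show ?thesis using assms by (simp add: field_simps)
  qed
  have "r ^ (n div N) * r \<le> r powr (real n / real N)"
    unfolding b using assms c by (intro powr_mono') auto
  then show ?thesis unfolding a using assms by (simp add: field_simps)
qed

context mchain begin

lemma Dv_geom: "\<exists>N \<rho>. N \<ge> 1 \<and> 0 \<le> \<rho> \<and> \<rho> < 1 \<and> (\<forall>n i. Dv n i \<le> 2 * \<rho> ^ (n div N))"
proof -
  obtain N where N: "N \<ge> 1" "\<And>i j. 0 < matpow P N i j" using pos_power by blast
  define \<delta> where "\<delta> = Min (range (\<lambda>(i,j). matpow P N i j))"
  have fin: "finite (range (\<lambda>(i,j). matpow P N i j))" by simp
  have dle: "\<delta> \<le> matpow P N i j" for i j
  proof -
    have "matpow P N i j \<in> range (\<lambda>(i,j). matpow P N i j)" by (rule range_eqI[of _ _ "(i,j)"]) simp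
    then show ?thesis unfolding \<delta>_def using fin by (rule Min_le[rotated])
  qed
  have "\<delta> \<in> range (\<lambda>(i,j). matpow P N i j)" unfolding \<delta>_def using fin by (rule Min_in) simp
  then have dpos: "0 < \<delta>" using N(2) by auto
  have d1: "\<delta> \<le> 1" using dle[of undefined undefined] matpow_le1[of N undefined undefined] by linarith
  define \<rho> where "\<rho> = 1 - \<delta>"
  have main: "Dv n i \<le> 2 * \<rho> ^ (n div N)" for n i
  proof (induction n arbitrary: i rule: less_induct)
    case (less n)
    show ?case
    proof (cases "n < N")
      case True
      then show ?thesis using Dv_le2 by simp
    next
      case False
      define n' where "n' = n - N"
      have n: "n = N + n'" using False by (simp add: n'_def)
      have "n' < n" using N(1) n by simp
      then have IH: "\<And>k. Dv n' k \<le> 2 * \<rho> ^ (n' div N)" using less by blast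
      have "Dv (N + n') i \<le> (1 - \<delta>) * (2 * \<rho> ^ (n' div N))"
        by (rule Dv_contract[OF IH dle]) (use dpos in simp)
      moreover have "n div N = Suc (n' div N)" using N(1) n by simp
      ultimately show ?thesis using n by (simp add: \<rho>_def)
    qed
  qed
  show ?thesis using main dpos d1 N(1) by (intro exI[of _ N] exI[of _ \<rho>]) (auto simp: \<rho>_def)
qed

definition mixb :: "nat \<Rightarrow> real" where "mixb n = Max (range (Dv n))"

lemma Dv_le_mixb: "Dv n i \<le> mixb n"
  unfolding mixb_def by (rule Max_ge) auto

lemma mixb_nonneg: "0 \<le> mixb n"
  using Dv_nonneg[of n undefined] Dv_le_mixb[of n undefined] by linarith

lemma mixb_summable: "summable mixb"
proof -
  obtain N \<rho> where N: "N \<ge> 1" "0 \<le> \<rho>" "\<rho> < 1" "\<And>n i. Dv n i \<le> 2 * \<rho> ^ (n div N)"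
    using Dv_geom by blast
  define r where "r = max \<rho> (1/2)"
  have r: "0 < r" "r < 1" "\<rho> \<le> r" using N by (auto simp: r_def)
  define \<theta> where "\<theta> = r powr (1 / real N)"
  have th: "0 \<le> \<theta>" "\<theta> < 1"
  proof -
    show "0 \<le> \<theta>" by (simp add: \<theta>_def)
    have "r powr (1 / real N) < 1 powr (1 / real N)" using r N(1) by (intro powr_less_mono2) auto
    then show "\<theta> < 1" by (simp add: \<theta>_def)
  qed
  have "mixb n \<le> 2 * (\<theta> ^ n / r)" for n
  proof -
    have "mixb n \<in> range (Dv n)" unfolding mixb_def by (rule Max_in) auto
    then obtain i where "mixb n = Dv n i" by auto
    also have "\<dots> \<le> 2 * \<rho> ^ (n div N)" by (rule N(4))
    also have "\<dots> \<le> 2 * r ^ (n div N)" using N(2) r by (intro mult_left_mono power_mono) auto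
    also have "\<dots> \<le> 2 * (\<theta> ^ n / r)" unfolding \<theta>_def using pow_div_le[OF r(1,2) N(1), of n] by linarith
    finally show ?thesis .
  qed
  note le = this
  have sm: "summable (\<lambda>n. 2 * (\<theta> ^ n / r))"
    using th by (intro summable_mult summable_divide summable_geometric) auto
  show ?thesis
    by (rule summable_comparison_test'[where N=0, OF sm]) (use mixb_nonneg le in auto)
qed

definition Kp :: real where "Kp = suminf mixb"

lemma Kp_nonneg: "0 \<le> Kp"
  unfolding Kp_def by (rule suminf_nonneg[OF mixb_summable mixb_nonneg])

definition pw :: "('e \<Rightarrow> 'v::real_normed_vector) \<Rightarrow> nat \<Rightarrow> 'e \<Rightarrow> 'v" where
  "pw f n i = (\<Sum>j\<in>UNIV. matpow P n i j *\<^sub>R f j)"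

definition pois :: "('e \<Rightarrow> 'v::real_normed_vector) \<Rightarrow> 'e \<Rightarrow> 'v" where
  "pois f i = (\<Sum>n. pw f n i)"

definition centered :: "('e \<Rightarrow> 'v::real_normed_vector) \<Rightarrow> bool" where
  "centered f \<longleftrightarrow> (\<Sum>j\<in>UNIV. \<mu> j *\<^sub>R f j) = 0"

lemma pw_centered: "centered f \<Longrightarrow> pw f n i = (\<Sum>j\<in>UNIV. (matpow P n i j - \<mu> j) *\<^sub>R f j)"
  unfolding centered_def pw_def by (simp add: scaleR_diff_left sum_subtractf)

lemma pw_bound:
  assumes c: "centered f" and B: "\<And>j. norm (f j) \<le> B"
  shows "norm (pw f n i) \<le> mixb n * B"
proof -
  have B0: "0 \<le> B" using B[of undefined] norm_ge_zero order_trans by blast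
  have "norm (pw f n i) \<le> (\<Sum>j\<in>UNIV. norm ((matpow P n i j - \<mu> j) *\<^sub>R f j))"
    unfolding pw_centered[OF c] by (rule norm_sum)
  also have "\<dots> \<le> (\<Sum>j\<in>UNIV. \<bar>matpow P n i j - \<mu> j\<bar> * B)"
    by (rule sum_mono) (simp add: B mult_left_mono)
  also have "\<dots> = Dv n i * B" by (simp add: Dv_def sum_distrib_right)
  also have "\<dots> \<le> mixb n * B" by (rule mult_right_mono[OF Dv_le_mixb B0])
  finally show ?thesis .
qed

lemma norm_bound_ex: "\<exists>B. \<forall>j. norm (f j) \<le> B" for f :: "'e \<Rightarrow> 'v::real_normed_vector"
  by (rule exI[of _ "\<Sum>j\<in>UNIV. norm (f j)"]) (auto intro: member_le_sum)

lemma pw_summable_norm: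
  assumes c: "centered f"
  shows "summable (\<lambda>n. norm (pw f n i))"
proof -
  obtain B where B: "\<And>j. norm (f j) \<le> B" using norm_bound_ex by blast
  show ?thesis
    by (rule summable_comparison_test'[where N=0 and g="\<lambda>n. mixb n * B"])
       (auto intro: summable_mult2 mixb_summable pw_bound[OF c B])
qed

lemma pw_summable:
  fixes f :: "'e \<Rightarrow> 'v::banach"
  assumes c: "centered f"
  shows "summable (\<lambda>n. pw f n i)"
  using pw_summable_norm[OF c] by (rule summable_norm_cancel)

lemma pois_bound:
  fixes f :: "'e \<Rightarrow> 'v::banach"
  assumes c: "centered f" and B: "\<And>j. norm (f j) \<le> B"
  shows "norm (pois f i) \<le> Kp * B"
proof -
  have "norm (pois f i) \<le> (\<Sum>n. norm (pw f n i))"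
    unfolding pois_def by (rule summable_norm[OF pw_summable_norm[OF c]])
  also have "\<dots> \<le> (\<Sum>n. mixb n * B)"
    by (rule suminf_le) (auto intro: pw_bound[OF c B] pw_summable_norm[OF c] summable_mult2 mixb_summable)
  also have "\<dots> = Kp * B" unfolding Kp_def by (rule suminf_mult2[symmetric, OF mixb_summable])
  finally show ?thesis .
qed

lemma centered_diff: "centered f \<Longrightarrow> centered g \<Longrightarrow> centered (\<lambda>j. f j - g j)"
  unfolding centered_def by (simp add: scaleR_diff_right sum_subtractf)

lemma pw_diff: "pw (\<lambda>j. f j - g j) n i = pw f n i - pw g n i"
  unfolding pw_def by (simp add: scaleR_diff_right sum_subtractf)

lemma pois_diff:
  fixes f g :: "'e \<Rightarrow> 'v::banach"
  assumes "centered f" "centered g"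
  shows "pois f i - pois g i = pois (\<lambda>j. f j - g j) i"
  unfolding pois_def pw_diff by (rule suminf_diff) (auto intro: pw_summable assms)

lemma pw_0: "pw f 0 i = f i"
proof -
  have "pw f 0 i = (\<Sum>j\<in>UNIV. if i = j then f j else 0)"
    unfolding pw_def by (rule sum.cong) auto
  then show ?thesis by simp
qed

lemma pw_Suc: "pw f (Suc n) i = (\<Sum>k\<in>UNIV. P i k *\<^sub>R pw f n k)"
proof -
  have "pw f (Suc n) i = (\<Sum>j\<in>UNIV. \<Sum>k\<in>UNIV. (P i k * matpow P n k j) *\<^sub>R f j)"
    unfolding pw_def matpow_Suc_left by (simp add: scaleR_sum_left)
  also have "\<dots> = (\<Sum>k\<in>UNIV. \<Sum>j\<in>UNIV. (P i k * matpow P n k j) *\<^sub>R f j)" by (rule sum.swap)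
  also have "\<dots> = (\<Sum>k\<in>UNIV. P i k *\<^sub>R pw f n k)"
    unfolding pw_def by (simp add: scaleR_sum_right)
  finally show ?thesis .
qed

lemma pois_eq:
  fixes f :: "'e \<Rightarrow> 'v::banach"
  assumes c: "centered f"
  shows "pois f i = f i + (\<Sum>k\<in>UNIV. P i k *\<^sub>R pois f k)"
proof -
  have "(\<Sum>n. pw f (Suc n) i) = pois f i - pw f 0 i"
    unfolding pois_def by (rule suminf_split_head[OF pw_summable[OF c]])
  moreover have "(\<Sum>n. pw f (Suc n) i) = (\<Sum>k\<in>UNIV. P i k *\<^sub>R pois f k)"
  proof -
    have "(\<Sum>n. pw f (Suc n) i) = (\<Sum>n. \<Sum>k\<in>UNIV. P i k *\<^sub>R pw f n k)" by (simp add: pw_Suc)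
    also have "\<dots> = (\<Sum>k\<in>UNIV. \<Sum>n. P i k *\<^sub>R pw f n k)"
      by (rule suminf_sum) (intro summable_scaleR_right pw_summable[OF c])
    also have "\<dots> = (\<Sum>k\<in>UNIV. P i k *\<^sub>R pois f k)"
      unfolding pois_def by (simp add: suminf_scaleR_right pw_summable[OF c])
    finally show ?thesis .
  qed
  ultimately show ?thesis by (simp add: pw_0)
qed

lemma centered_component: "centered f \<Longrightarrow> centered (\<lambda>j. f j $ a)"
  for f :: "'e \<Rightarrow> real^'d"
  unfolding centered_def
proof -
  assume "(\<Sum>j\<in>UNIV. \<mu> j *\<^sub>R f j) = 0"
  then have "(\<Sum>j\<in>UNIV. \<mu> j *\<^sub>R f j) $ a = 0" by simp
  then show "(\<Sum>j\<in>UNIV. \<mu> j *\<^sub>R f j $ a) = 0" by simp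
qed

lemma pois_component:
  fixes f :: "'e \<Rightarrow> real^'d"
  assumes c: "centered f"
  shows "pois f i $ a = pois (\<lambda>j. f j $ a) i"
proof -
  have "pois f i $ a = (\<Sum>n. pw f n i $ a)"
    unfolding pois_def by (rule bounded_linear.suminf[OF bounded_linear_vec_nth pw_summable[OF c]])
  also have "\<dots> = pois (\<lambda>j. f j $ a) i"
    unfolding pois_def pw_def by simp
  finally show ?thesis .
qed

end


definition BL :: "('a::real_normed_vector \<Rightarrow> real) \<Rightarrow> bool" where
  "BL f \<longleftrightarrow> (\<exists>B L. \<forall>x y. \<bar>f x\<bar> \<le> B \<and> \<bar>f x - f y\<bar> \<le> L * norm (x - y))"

lemma BLI: "(\<And>x. \<bar>f x\<bar> \<le> B) \<Longrightarrow> (\<And>x y. \<bar>f x - f y\<bar> \<le> L * norm (x - y)) \<Longrightarrow> BL f"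
  unfolding BL_def by blast

lemma BLE:
  assumes "BL f"
  obtains B L where "0 \<le> B" "0 \<le> L" "\<And>x. \<bar>f x\<bar> \<le> B" "\<And>x y. \<bar>f x - f y\<bar> \<le> L * norm (x - y)"
proof -
  obtain B L where H: "\<And>x y. \<bar>f x\<bar> \<le> B \<and> \<bar>f x - f y\<bar> \<le> L * norm (x - y)" using assms unfolding BL_def by blast
  have "0 \<le> B" using H[of 0 0] by linarith
  moreover have "\<bar>f x - f y\<bar> \<le> max L 0 * norm (x - y)" for x y
    using H[of x y] by (smt (verit, best) mult_right_mono norm_ge_zero)
  ultimately show ?thesis using that[of B "max L 0"] H by auto
qed

lemma BL_const: "BL (\<lambda>x. c)" by (rule BLI[of _ "\<bar>c\<bar>" 0]) auto

lemma BL_add: "BL f \<Longrightarrow> BL g \<Longrightarrow> BL (\<lambda>x. f x + g x)"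
proof -
  assume "BL f" "BL g"
  then obtain B1 L1 B2 L2 where f: "\<And>x. \<bar>f x\<bar> \<le> B1" "\<And>x y. \<bar>f x - f y\<bar> \<le> L1 * norm (x - y)"
    and g: "\<And>x. \<bar>g x\<bar> \<le> B2" "\<And>x y. \<bar>g x - g y\<bar> \<le> L2 * norm (x - y)" by (metis BLE)
  show ?thesis
  proof (rule BLI[of _ "B1 + B2" "L1 + L2"])
    show "\<bar>f x + g x\<bar> \<le> B1 + B2" for x using f(1)[of x] g(1)[of x] by linarith
    show "\<bar>f x + g x - (f y + g y)\<bar> \<le> (L1 + L2) * norm (x - y)" for x y
      using f(2)[of x y] g(2)[of x y] by (simp add: algebra_simps)
  qed
qed

lemma BL_neg: "BL f \<Longrightarrow> BL (\<lambda>x. - f x)"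
  unfolding BL_def by (metis abs_minus_cancel minus_diff_eq minus_diff_minus abs_minus_commute)

lemma BL_diff: "BL f \<Longrightarrow> BL g \<Longrightarrow> BL (\<lambda>x. f x - g x)"
  using BL_add[OF _ BL_neg, of f g] by simp

lemma BL_mult: "BL f \<Longrightarrow> BL g \<Longrightarrow> BL (\<lambda>x. f x * g x)"
proof -
  assume "BL f" "BL g"
  then obtain B1 L1 B2 L2 where f: "0 \<le> B1" "0 \<le> L1" "\<And>x. \<bar>f x\<bar> \<le> B1" "\<And>x y. \<bar>f x - f y\<bar> \<le> L1 * norm (x - y)"
    and g: "0 \<le> B2" "0 \<le> L2" "\<And>x. \<bar>g x\<bar> \<le> B2" "\<And>x y. \<bar>g x - g y\<bar> \<le> L2 * norm (x - y)" by (metis BLE)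
  show ?thesis
  proof (rule BLI[of _ "B1 * B2" "B1 * L2 + B2 * L1"])
    show "\<bar>f x * g x\<bar> \<le> B1 * B2" for x
      unfolding abs_mult by (rule mult_mono) (use f g in auto)
    show "\<bar>f x * g x - f y * g y\<bar> \<le> (B1 * L2 + B2 * L1) * norm (x - y)" for x y
    proof -
      have "f x * g x - f y * g y = f x * (g x - g y) + g y * (f x - f y)" by (simp add: algebra_simps)
      then have "\<bar>f x * g x - f y * g y\<bar> \<le> \<bar>f x\<bar> * \<bar>g x - g y\<bar> + \<bar>g y\<bar> * \<bar>f x - f y\<bar>"
        by (simp add: abs_mult[symmetric] abs_triangle_ineq)
      also have "\<dots> \<le> B1 * (L2 * norm (x - y)) + B2 * (L1 * norm (x - y))"
        by (intro add_mono mult_mono) (use f g in auto)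
      finally show ?thesis by (simp add: algebra_simps)
    qed
  qed
qed

lemma BL_sum: "finite A \<Longrightarrow> (\<And>i. i \<in> A \<Longrightarrow> BL (f i)) \<Longrightarrow> BL (\<lambda>x. \<Sum>i\<in>A. f i x)"
proof (induction A rule: finite_induct)
  case empty then show ?case by (simp add: BL_const)
next
  case (insert a A) then show ?case by (simp add: BL_add)
qed

lemma BL_cont: "BL f \<Longrightarrow> continuous_on UNIV f"
proof -
  assume "BL f"
  then obtain B L where "0 \<le> L" "\<And>x y. \<bar>f x - f y\<bar> \<le> L * norm (x - y)" by (metis BLE)
  then have "L-lipschitz_on UNIV f" by (intro lipschitz_onI) (auto simp: dist_norm dist_real_def)
  then show ?thesis by (rule lipschitz_on_continuous_on)
qed

lemma Vsteps_finite: "finite (Vsteps :: (real^'d) set)"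
proof -
  have "(Vsteps :: (real^'d) set) = range (\<lambda>a::'d. axis a (1::real)) \<union> range (\<lambda>a::'d. - axis a (1::real))"
    unfolding Vsteps_def by auto
  then show ?thesis by (metis finite_UnI finite_imageI finite_class.finite_UNIV)
qed

lemma Vsteps_norm: "u \<in> Vsteps \<Longrightarrow> norm u = 1"
  unfolding Vsteps_def by auto

lemma Vsteps_comp: assumes "u \<in> Vsteps" shows "\<bar>u $ a\<bar> \<le> 1"
  using component_le_norm_cart[of u a] Vsteps_norm[OF assms] by simp

lemma outer_nth [simp]: "outer x y $ a $ b = x $ a * y $ b"
  by (simp add: outer_def)

lemma C2_lipschitz:
  assumes "C2_bdd_deriv f"
  shows "\<exists>L. \<forall>x y. \<bar>f x - f y\<bar> \<le> L * norm (x - y)"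
proof -
  obtain Df D2f where d: "\<And>y. (f has_derivative blinfun_apply (Df y)) (at y)" and b: "bounded (range Df)"
    using assms unfolding C2_bdd_deriv_def by blast
  obtain B where B: "\<And>y. norm (Df y) \<le> B" using b unfolding bounded_iff by blast
  have "norm (f x - f y) \<le> B * norm (x - y)" for x y
    by (rule differentiable_bound[of UNIV f "\<lambda>y. blinfun_apply (Df y)"])
       (auto simp: d B norm_blinfun.rep_eq[symmetric])
  then show ?thesis by auto
qed

lemma C2_cont:
  assumes "C2_bdd_deriv f"
  shows "continuous_on UNIV f"
proof -
  obtain Df D2f where d: "\<And>y. (f has_derivative blinfun_apply (Df y)) (at y)"
    using assms unfolding C2_bdd_deriv_def by blast
  then show ?thesis by (meson continuous_at_imp_continuous_on has_derivative_continuous)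
qed

locale model = mchain P \<mu> for P :: "'e::finite \<Rightarrow> 'e \<Rightarrow> real" and \<mu> +
  fixes p :: "'e \<Rightarrow> real^'d \<Rightarrow> real^'d \<Rightarrow> real"
  assumes p_nonneg: "\<And>k y u. 0 \<le> p k y u"
    and p_sum: "\<And>k y. (\<Sum>u\<in>Vsteps. p k y u) = 1"
    and p_C2: "\<And>k u. u \<in> Vsteps \<Longrightarrow> C2_bdd_deriv (\<lambda>y. p k y u)"
    and centered_g: "\<And>y. (\<Sum>k\<in>UNIV. \<mu> k *\<^sub>R gdrift p k y) = 0"
begin

lemma p_le1: "u \<in> Vsteps \<Longrightarrow> p k y u \<le> 1"
proof -
  assume u: "u \<in> Vsteps"
  have "p k y u \<le> (\<Sum>u\<in>Vsteps. p k y u)"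
    by (rule member_le_sum[OF u]) (auto simp: p_nonneg Vsteps_finite)
  then show ?thesis by (simp add: p_sum)
qed

lemma p_BL: "u \<in> Vsteps \<Longrightarrow> BL (\<lambda>y. p k y u)"
proof -
  assume u: "u \<in> Vsteps"
  obtain L where "\<And>x y. \<bar>p k x u - p k y u\<bar> \<le> L * norm (x - y)" using C2_lipschitz[OF p_C2[OF u]] by blast
  moreover have "\<bar>p k x u\<bar> \<le> 1" for x using p_nonneg p_le1[OF u] by simp
  ultimately show ?thesis by (intro BLI) auto
qed

lemma p_cont: "u \<in> Vsteps \<Longrightarrow> continuous_on UNIV (\<lambda>y. p k y u)"
  by (rule C2_cont[OF p_C2])

lemma p_unif_lip: "\<exists>Lp\<ge>0. \<forall>k. \<forall>u\<in>Vsteps. \<forall>x y. \<bar>p k x u - p k y u\<bar> \<le> Lp * norm (x - y)"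
proof -
  have "\<forall>k u. \<exists>L. u \<in> Vsteps \<longrightarrow> 0 \<le> L \<and> (\<forall>x y. \<bar>p k x u - p k y u\<bar> \<le> L * norm (x - y))"
  proof (intro allI)
    fix k u
    show "\<exists>L. u \<in> Vsteps \<longrightarrow> 0 \<le> L \<and> (\<forall>x y. \<bar>p k x u - p k y u\<bar> \<le> L * norm (x - y))"
    proof (cases "u \<in> Vsteps")
      case True
      then obtain B L where "0 \<le> L" "\<And>x y. \<bar>p k x u - p k y u\<bar> \<le> L * norm (x - y)"
        using p_BL BLE by metis
      then show ?thesis by blast
    qed auto
  qed
  then obtain Lf where Lf: "\<And>k u. u \<in> Vsteps \<Longrightarrow> 0 \<le> Lf k u \<and> (\<forall>x y. \<bar>p k x u - p k y u\<bar> \<le> Lf k u * norm (x - y))"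
    by metis
  define Lp where "Lp = (\<Sum>k\<in>UNIV. \<Sum>u\<in>Vsteps. Lf k u)"
  have le: "Lf k u \<le> Lp" if "u \<in> Vsteps" for k u
  proof -
    have "Lf k u \<le> (\<Sum>u\<in>Vsteps. Lf k u)"
      by (rule member_le_sum[OF that]) (auto simp: Lf Vsteps_finite)
    also have "\<dots> \<le> Lp" unfolding Lp_def
      by (rule member_le_sum[of k, where f="\<lambda>k. \<Sum>u\<in>Vsteps. Lf k u"]) (auto intro!: sum_nonneg simp: Lf)
    finally show ?thesis .
  qed
  have "0 \<le> Lp" unfolding Lp_def by (auto intro!: sum_nonneg simp: Lf)
  moreover have "\<bar>p k x u - p k y u\<bar> \<le> Lp * norm (x - y)" if "u \<in> Vsteps" for k u x y
    using Lf[OF that] le[OF that] by (meson mult_right_mono norm_ge_zero order_trans)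
  ultimately show ?thesis by blast
qed

definition Lp :: real where "Lp = (SOME Lp. Lp \<ge> 0 \<and> (\<forall>k. \<forall>u\<in>Vsteps. \<forall>x y. \<bar>p k x u - p k y u\<bar> \<le> Lp * norm (x - y)))"

lemma Lp: "0 \<le> Lp" "u \<in> Vsteps \<Longrightarrow> \<bar>p k x u - p k y u\<bar> \<le> Lp * norm (x - y)"
  using someI_ex[OF p_unif_lip] unfolding Lp_def[symmetric] by auto

lemma gdrift_nth: "gdrift p k y $ a = (\<Sum>u\<in>Vsteps. p k y u * u $ a)"
  by (simp add: gdrift_def)

lemma gdrift_norm: "norm (gdrift p k y) \<le> 1"
proof -
  have "norm (gdrift p k y) \<le> (\<Sum>u\<in>Vsteps. norm (p k y u *\<^sub>R u))"
    unfolding gdrift_def by (rule norm_sum)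
  also have "\<dots> = (\<Sum>u\<in>Vsteps. p k y u)"
    by (rule sum.cong) (auto simp: Vsteps_norm p_nonneg)
  finally show ?thesis by (simp add: p_sum)
qed

lemma gdrift_lip: "norm (gdrift p k x - gdrift p k y) \<le> (real (card (Vsteps::(real^'d) set)) * Lp) * norm (x - y)"
proof -
  have "norm (gdrift p k x - gdrift p k y) = norm (\<Sum>u\<in>Vsteps. (p k x u - p k y u) *\<^sub>R u)"
    unfolding gdrift_def by (simp add: scaleR_diff_left sum_subtractf)
  also have "\<dots> \<le> (\<Sum>u\<in>Vsteps. norm ((p k x u - p k y u) *\<^sub>R u))"
    by (rule norm_sum)
  also have "\<dots> \<le> (\<Sum>u\<in>(Vsteps::(real^'d) set). Lp * norm (x - y))"
    by (rule sum_mono) (simp add: Vsteps_norm Lp)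
  finally show ?thesis by simp
qed

definition Lg :: real where "Lg = real (card (Vsteps::(real^'d) set)) * Lp"

lemma Lg_nonneg: "0 \<le> Lg" by (simp add: Lg_def Lp)

lemma centered_gdrift: "centered (\<lambda>k. gdrift p k y)"
  unfolding centered_def by (rule centered_g)

lemma vcorr_pois: "vcorr P p i y = pois (\<lambda>k. gdrift p k y) i"
  unfolding vcorr_def pois_def pw_def by simp

lemma vcorr_norm: "norm (vcorr P p i y) \<le> Kp"
  unfolding vcorr_pois using pois_bound[OF centered_gdrift gdrift_norm] by simp

lemma vcorr_lip: "norm (vcorr P p i x - vcorr P p i y) \<le> (Kp * Lg) * norm (x - y)"
proof -
  have "vcorr P p i x - vcorr P p i y = pois (\<lambda>k. gdrift p k x - gdrift p k y) i"
    unfolding vcorr_pois by (rule pois_diff[OF centered_gdrift centered_gdrift])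
  also have "norm \<dots> \<le> Kp * (Lg * norm (x - y))"
    by (rule pois_bound) (auto intro: centered_diff centered_gdrift simp: gdrift_lip Lg_def)
  finally show ?thesis by (simp add: mult.assoc)
qed

lemma vcorr_BL: "BL (\<lambda>y. vcorr P p i y $ a)"
proof (rule BLI[of _ Kp "Kp * Lg"])
  show "\<bar>vcorr P p i x $ a\<bar> \<le> Kp" for x using component_le_norm_cart vcorr_norm order_trans by blast
  show "\<bar>vcorr P p i x $ a - vcorr P p i y $ a\<bar> \<le> Kp * Lg * norm (x - y)" for x y
    using component_le_norm_cart[of "vcorr P p i x - vcorr P p i y" a] vcorr_lip[of i x y] by simp
qed

lemma vcorr_cont: "continuous_on UNIV (\<lambda>y. vcorr P p i y)"
proof -
  have "(Kp * Lg)-lipschitz_on UNIV (\<lambda>y. vcorr P p i y)"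
    by (intro lipschitz_onI) (auto simp: dist_norm vcorr_lip Kp_nonneg Lg_nonneg)
  then show ?thesis by (rule lipschitz_on_continuous_on)
qed

lemma vcorr_eq: "vcorr P p i y = gdrift p i y + (\<Sum>k\<in>UNIV. P i k *\<^sub>R vcorr P p k y)"
  unfolding vcorr_pois by (rule pois_eq[OF centered_gdrift])

lemma gdrift_BL: "BL (\<lambda>y. gdrift p k y $ a)"
  unfolding gdrift_nth by (intro BL_sum BL_mult BL_const p_BL Vsteps_finite)

lemma alpha_nth: "alpha p i y $ a $ b = (\<Sum>u\<in>Vsteps. p i y u * (u $ a * u $ b))"
  by (simp add: alpha_def)

lemma alpha_BL: "BL (\<lambda>y. alpha p i y $ a $ b)"
  unfolding alpha_nth by (intro BL_sum BL_mult BL_const p_BL Vsteps_finite)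

lemma abar_nth: "abar P \<mu> p y $ a $ b = (\<Sum>i\<in>UNIV. \<mu> i * (alpha p i y $ a $ b
   + gdrift p i y $ a * vcorr P p i y $ b + vcorr P p i y $ a * gdrift p i y $ b
   - 2 * (gdrift p i y $ a * gdrift p i y $ b)))"
  by (simp add: abar_def)

lemma abar_BL: "BL (\<lambda>y. abar P \<mu> p y $ a $ b)"
  unfolding abar_nth
  by (intro BL_sum BL_mult BL_const BL_add BL_diff alpha_BL gdrift_BL vcorr_BL) auto

end


lemma alg1:
  fixes w Va Vb :: "'e::finite \<Rightarrow> real"
  assumes w1: "(\<Sum>j\<in>UNIV. w j) = 1" and pa: "(\<Sum>j\<in>UNIV. w j * Va j) = va - ga"
    and pb: "(\<Sum>j\<in>UNIV. w j * Vb j) = vb - gb"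
  shows "(\<Sum>j\<in>UNIV. w j * (A + (Va j - va) * gb + ga * (Vb j - vb) + (Va j - va) * (Vb j - vb)))
    = A - 2 * (ga * gb) + ga * vb + va * gb + (\<Sum>j\<in>UNIV. w j * (Va j * Vb j)) - va * vb"
proof -
  have "(\<Sum>j\<in>UNIV. w j * (A + (Va j - va) * gb + ga * (Vb j - vb) + (Va j - va) * (Vb j - vb)))
    = (\<Sum>j\<in>UNIV. (A - va * gb - ga * vb + va * vb) * w j + (gb - vb) * (w j * Va j) + (ga - va) * (w j * Vb j)
        + w j * (Va j * Vb j))"
    by (rule sum.cong) (auto simp: algebra_simps)
  also have "\<dots> = (A - va * gb - ga * vb + va * vb) * (\<Sum>j\<in>UNIV. w j) + (gb - vb) * (\<Sum>j\<in>UNIV. w j * Va j)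
      + (ga - va) * (\<Sum>j\<in>UNIV. w j * Vb j) + (\<Sum>j\<in>UNIV. w j * (Va j * Vb j))"
    by (simp add: sum.distrib sum_distrib_left)
  also have "\<dots> = A - 2 * (ga * gb) + ga * vb + va * gb + (\<Sum>j\<in>UNIV. w j * (Va j * Vb j)) - va * vb"
    unfolding w1 pa pb by (simp add: algebra_simps)
  finally show ?thesis .
qed

lemma comp_prod_bound:
  fixes X Y :: "real^'d"
  assumes "norm X \<le> R" "norm Y \<le> R" "norm (X - Y) \<le> e"
  shows "\<bar>X $ a * X $ b - Y $ a * Y $ b\<bar> \<le> 2 * R * e"
proof -
  have "X $ a * X $ b - Y $ a * Y $ b = (X - Y) $ a * X $ b + Y $ a * (X - Y) $ b"
    by (simp add: algebra_simps)
  then have "\<bar>X $ a * X $ b - Y $ a * Y $ b\<bar> \<le> \<bar>(X - Y) $ a\<bar> * \<bar>X $ b\<bar> + \<bar>Y $ a\<bar> * \<bar>(X - Y) $ b\<bar>"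
    by (metis abs_mult abs_triangle_ineq)
  also have "\<dots> \<le> e * R + R * e"
  proof -
    have 1: "\<bar>(X - Y) $ a\<bar> \<le> e" using component_le_norm_cart[of "X - Y" a] assms(3) by linarith
    have 2: "\<bar>(X - Y) $ b\<bar> \<le> e" using component_le_norm_cart[of "X - Y" b] assms(3) by linarith
    have 3: "\<bar>X $ b\<bar> \<le> R" using component_le_norm_cart[of X b] assms(1) by linarith
    have 4: "\<bar>Y $ a\<bar> \<le> R" using component_le_norm_cart[of Y a] assms(2) by linarith
    show ?thesis by (intro add_mono mult_mono 1 2 3 4) (use 1 4 in auto)
  qed
  finally show ?thesis by simp
qed

context model begin

definition Xf :: "real \<Rightarrow> 'e \<Rightarrow> real^'d \<Rightarrow> real^'d \<Rightarrow> real^'d" where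
  "Xf s j u y = u + vcorr P p j (y + s *\<^sub>R u)"

definition mf :: "real \<Rightarrow> 'e \<Rightarrow> real^'d \<Rightarrow> real^'d" where
  "mf s i y = (\<Sum>j\<in>UNIV. \<Sum>u\<in>Vsteps. (P i j * p i y u) *\<^sub>R Xf s j u y)"

definition Phi :: "real \<Rightarrow> 'e \<Rightarrow> real^'d \<Rightarrow> 'd \<Rightarrow> 'd \<Rightarrow> real" where
  "Phi s i y a b = (\<Sum>j\<in>UNIV. \<Sum>u\<in>Vsteps. P i j * p i y u *
      ((Xf s j u y - mf s i y) $ a * (Xf s j u y - mf s i y) $ b))"

definition hfun :: "'e \<Rightarrow> real^'d \<Rightarrow> 'd \<Rightarrow> 'd \<Rightarrow> real" where
  "hfun i y a b = Phi 0 i y a b - abar P \<mu> p y $ a $ b"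

lemma wsum1: "(\<Sum>j\<in>UNIV. \<Sum>u\<in>Vsteps. P i j * p i y u) = 1"
  by (simp add: sum_distrib_left[symmetric] p_sum P_rowsum)

lemma wsum_abs:
  assumes "\<And>j u. u \<in> Vsteps \<Longrightarrow> \<bar>F j u\<bar> \<le> B"
  shows "\<bar>\<Sum>j\<in>UNIV. \<Sum>u\<in>Vsteps. P i j * p i y u * F j u\<bar> \<le> B"
proof -
  have "\<bar>\<Sum>j\<in>UNIV. \<Sum>u\<in>Vsteps. P i j * p i y u * F j u\<bar> \<le> (\<Sum>j\<in>UNIV. \<bar>\<Sum>u\<in>Vsteps. P i j * p i y u * F j u\<bar>)"
    by (rule sum_abs)
  also have "\<dots> \<le> (\<Sum>j\<in>UNIV. \<Sum>u\<in>Vsteps. P i j * p i y u * B)"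
  proof (rule sum_mono)
    fix j
    have "\<bar>\<Sum>u\<in>Vsteps. P i j * p i y u * F j u\<bar> \<le> (\<Sum>u\<in>Vsteps. \<bar>P i j * p i y u * F j u\<bar>)"
      by (rule sum_abs)
    also have "\<dots> \<le> (\<Sum>u\<in>Vsteps. P i j * p i y u * B)"
      by (rule sum_mono) (auto simp: abs_mult P_nonneg p_nonneg intro!: mult_left_mono assms)
    finally show "\<bar>\<Sum>u\<in>Vsteps. P i j * p i y u * F j u\<bar> \<le> (\<Sum>u\<in>Vsteps. P i j * p i y u * B)" .
  qed
  also have "\<dots> = B" by (simp add: sum_distrib_right[symmetric] wsum1)
  finally show ?thesis .
qed

lemma wsum_norm:
  fixes F :: "'e \<Rightarrow> real^'d \<Rightarrow> 'v::real_normed_vector"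
  assumes "\<And>j u. u \<in> Vsteps \<Longrightarrow> norm (F j u) \<le> B"
  shows "norm (\<Sum>j\<in>UNIV. \<Sum>u\<in>Vsteps. (P i j * p i y u) *\<^sub>R F j u) \<le> B"
proof -
  have "norm (\<Sum>j\<in>UNIV. \<Sum>u\<in>Vsteps. (P i j * p i y u) *\<^sub>R F j u) \<le> (\<Sum>j\<in>UNIV. norm (\<Sum>u\<in>Vsteps. (P i j * p i y u) *\<^sub>R F j u))"
    by (rule norm_sum)
  also have "\<dots> \<le> (\<Sum>j\<in>UNIV. \<Sum>u\<in>Vsteps. P i j * p i y u * B)"
  proof (rule sum_mono)
    fix j
    have "norm (\<Sum>u\<in>Vsteps. (P i j * p i y u) *\<^sub>R F j u) \<le> (\<Sum>u\<in>Vsteps. norm ((P i j * p i y u) *\<^sub>R F j u))"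
      by (rule norm_sum)
    also have "\<dots> \<le> (\<Sum>u\<in>Vsteps. P i j * p i y u * B)"
      by (rule sum_mono) (auto simp: P_nonneg p_nonneg intro!: mult_left_mono assms)
    finally show "norm (\<Sum>u\<in>Vsteps. (P i j * p i y u) *\<^sub>R F j u) \<le> (\<Sum>u\<in>Vsteps. P i j * p i y u * B)" .
  qed
  also have "\<dots> = B" by (simp add: sum_distrib_right[symmetric] wsum1)
  finally show ?thesis .
qed

lemma mf0: "mf 0 i y = vcorr P p i y"
proof -
  have "mf 0 i y = (\<Sum>j\<in>UNIV. \<Sum>u\<in>Vsteps. (P i j * p i y u) *\<^sub>R u)
      + (\<Sum>j\<in>UNIV. \<Sum>u\<in>Vsteps. (P i j * p i y u) *\<^sub>R vcorr P p j y)"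
    unfolding mf_def Xf_def by (simp add: scaleR_add_right sum.distrib)
  also have "(\<Sum>j\<in>UNIV. \<Sum>u\<in>Vsteps. (P i j * p i y u) *\<^sub>R u) = gdrift p i y"
  proof -
    have "(\<Sum>j\<in>UNIV. \<Sum>u\<in>Vsteps. (P i j * p i y u) *\<^sub>R u) = (\<Sum>j\<in>UNIV. P i j *\<^sub>R gdrift p i y)"
      unfolding gdrift_def by (simp add: scaleR_sum_right)
    also have "\<dots> = gdrift p i y" by (simp add: scaleR_sum_left[symmetric] P_rowsum)
    finally show ?thesis .
  qed
  also have "(\<Sum>j\<in>UNIV. \<Sum>u\<in>Vsteps. (P i j * p i y u) *\<^sub>R vcorr P p j y) = (\<Sum>j\<in>UNIV. P i j *\<^sub>R vcorr P p j y)"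
    by (simp add: scaleR_sum_left[symmetric] sum_distrib_left[symmetric] p_sum)
  finally show ?thesis using vcorr_eq[of i y] by simp
qed

lemma inner_u: "(\<Sum>u\<in>Vsteps. p i y u * ((u $ a + ca) * (u $ b + cb)))
   = alpha p i y $ a $ b + ca * gdrift p i y $ b + gdrift p i y $ a * cb + ca * cb"
proof -
  have "(\<Sum>u\<in>Vsteps. p i y u * ((u $ a + ca) * (u $ b + cb)))
     = (\<Sum>u\<in>Vsteps. p i y u * (u $ a * u $ b) + ca * (p i y u * u $ b) + (p i y u * u $ a) * cb + ca * cb * p i y u)"
    by (rule sum.cong) (auto simp: algebra_simps)
  also have "\<dots> = (\<Sum>u\<in>Vsteps. p i y u * (u $ a * u $ b)) + ca * (\<Sum>u\<in>Vsteps. p i y u * u $ b)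
      + (\<Sum>u\<in>Vsteps. p i y u * u $ a) * cb + ca * cb * (\<Sum>u\<in>Vsteps. p i y u)"
    by (simp add: sum.distrib sum_distrib_left sum_distrib_right)
  finally show ?thesis by (simp add: alpha_nth gdrift_nth p_sum)
qed

lemma PV_comp: "(\<Sum>j\<in>UNIV. P i j * vcorr P p j y $ a) = vcorr P p i y $ a - gdrift p i y $ a"
proof -
  have "vcorr P p i y $ a = gdrift p i y $ a + (\<Sum>k\<in>UNIV. P i k * vcorr P p k y $ a)"
    using arg_cong[OF vcorr_eq[of i y], of "\<lambda>x. x $ a"] by simp
  then show ?thesis by simp
qed

lemma Phi0_formula: "Phi 0 i y a b = alpha p i y $ a $ b - 2 * (gdrift p i y $ a * gdrift p i y $ b)
   + gdrift p i y $ a * vcorr P p i y $ b + vcorr P p i y $ a * gdrift p i y $ b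
   + (\<Sum>j\<in>UNIV. P i j * (vcorr P p j y $ a * vcorr P p j y $ b)) - vcorr P p i y $ a * vcorr P p i y $ b"
proof -
  let ?v = "\<lambda>j c. vcorr P p j y $ c"
  have "Phi 0 i y a b = (\<Sum>j\<in>UNIV. P i j * (\<Sum>u\<in>Vsteps. p i y u *
      ((u $ a + (?v j a - ?v i a)) * (u $ b + (?v j b - ?v i b)))))"
    unfolding Phi_def mf0 by (simp add: Xf_def sum_distrib_left mult.assoc add_diff_eq)
  also have "\<dots> = (\<Sum>j\<in>UNIV. P i j * (alpha p i y $ a $ b + (?v j a - ?v i a) * gdrift p i y $ b
      + gdrift p i y $ a * (?v j b - ?v i b) + (?v j a - ?v i a) * (?v j b - ?v i b)))"
    by (simp add: inner_u)
  finally show ?thesis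
    by (simp only: alg1[OF P_rowsum PV_comp PV_comp])
qed

lemma hfun_centered: "(\<Sum>i\<in>UNIV. \<mu> i * hfun i y a b) = 0"
proof -
  let ?v = "\<lambda>j c. vcorr P p j y $ c"
  have q: "(\<Sum>i\<in>UNIV. \<mu> i * (\<Sum>j\<in>UNIV. P i j * (?v j a * ?v j b))) = (\<Sum>j\<in>UNIV. \<mu> j * (?v j a * ?v j b))"
  proof -
    have "(\<Sum>i\<in>UNIV. \<mu> i * (\<Sum>j\<in>UNIV. P i j * (?v j a * ?v j b))) = (\<Sum>i\<in>UNIV. \<Sum>j\<in>UNIV. \<mu> i * P i j * (?v j a * ?v j b))"
      by (simp add: sum_distrib_left mult.assoc)
    also have "\<dots> = (\<Sum>j\<in>UNIV. \<Sum>i\<in>UNIV. \<mu> i * P i j * (?v j a * ?v j b))" by (rule sum.swap)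
    also have "\<dots> = (\<Sum>j\<in>UNIV. \<mu> j * (?v j a * ?v j b))"
      by (simp add: sum_distrib_right[symmetric] mu_inv)
    finally show ?thesis .
  qed
  have "(\<Sum>i\<in>UNIV. \<mu> i * Phi 0 i y a b) = (\<Sum>i\<in>UNIV. \<mu> i * (alpha p i y $ a $ b
   + gdrift p i y $ a * vcorr P p i y $ b + vcorr P p i y $ a * gdrift p i y $ b
   - 2 * (gdrift p i y $ a * gdrift p i y $ b))) + ((\<Sum>i\<in>UNIV. \<mu> i * (\<Sum>j\<in>UNIV. P i j * (?v j a * ?v j b)))
     - (\<Sum>i\<in>UNIV. \<mu> i * (?v i a * ?v i b)))"
    unfolding Phi0_formula by (simp add: sum.distrib sum_subtractf algebra_simps)
  also have "\<dots> = abar P \<mu> p y $ a $ b" unfolding q abar_nth by simp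
  finally have "(\<Sum>i\<in>UNIV. \<mu> i * Phi 0 i y a b) = abar P \<mu> p y $ a $ b" .
  then show ?thesis
    unfolding hfun_def by (simp add: right_diff_distrib sum_subtractf sum_distrib_right[symmetric] mu_sum)
qed

lemma hfun_BL: "BL (\<lambda>y. hfun i y a b)"
  unfolding hfun_def Phi0_formula
  by (intro BL_sum BL_mult BL_const BL_add BL_diff alpha_BL gdrift_BL vcorr_BL abar_BL) auto

lemma Xf_norm: "u \<in> Vsteps \<Longrightarrow> norm (Xf s j u y) \<le> 1 + Kp"
  unfolding Xf_def using norm_triangle_ineq[of u] Vsteps_norm vcorr_norm
  by (smt (verit, best))

lemma mf_norm: "norm (mf s i y) \<le> 1 + Kp"
  unfolding mf_def by (rule wsum_norm) (rule Xf_norm)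

lemma Xf_diff: assumes "u \<in> Vsteps" "0 \<le> s"
  shows "norm (Xf s j u y - Xf 0 j u y) \<le> Kp * Lg * s"
proof -
  have "norm (Xf s j u y - Xf 0 j u y) = norm (vcorr P p j (y + s *\<^sub>R u) - vcorr P p j y)"
    by (simp add: Xf_def)
  also have "\<dots> \<le> Kp * Lg * norm (s *\<^sub>R u)" using vcorr_lip[of j "y + s *\<^sub>R u" y] by simp
  also have "\<dots> = Kp * Lg * s" using assms Vsteps_norm[OF assms(1)] by simp
  finally show ?thesis .
qed

lemma mf_diff: assumes "0 \<le> s" shows "norm (mf s i y - mf 0 i y) \<le> Kp * Lg * s"
proof -
  have "mf s i y - mf 0 i y = (\<Sum>j\<in>UNIV. \<Sum>u\<in>Vsteps. (P i j * p i y u) *\<^sub>R (Xf s j u y - Xf 0 j u y))"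
    unfolding mf_def by (simp add: scaleR_diff_right sum_subtractf)
  also have "norm \<dots> \<le> Kp * Lg * s" by (rule wsum_norm) (rule Xf_diff[OF _ assms])
  finally show ?thesis .
qed


lemma Z_norm: "u \<in> Vsteps \<Longrightarrow> norm (Xf s j u y - mf s i y) \<le> 2 * (1 + Kp)"
proof -
  assume u: "u \<in> Vsteps"
  have "norm (Xf s j u y - mf s i y) \<le> norm (Xf s j u y) + norm (mf s i y)" by (rule norm_triangle_ineq4)
  also have "\<dots> \<le> (1 + Kp) + (1 + Kp)" by (intro add_mono Xf_norm[OF u] mf_norm)
  finally show ?thesis by simp
qed

lemma Z_diff: "u \<in> Vsteps \<Longrightarrow> 0 \<le> s \<Longrightarrow> norm (Xf s j u y - mf s i y - (Xf 0 j u y - mf 0 i y)) \<le> 2 * (Kp * Lg * s)"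
proof -
  assume u: "u \<in> Vsteps" and s: "0 \<le> s"
  have "Xf s j u y - mf s i y - (Xf 0 j u y - mf 0 i y) = (Xf s j u y - Xf 0 j u y) - (mf s i y - mf 0 i y)"
    by simp
  also have "norm \<dots> \<le> norm (Xf s j u y - Xf 0 j u y) + norm (mf s i y - mf 0 i y)" by (rule norm_triangle_ineq4)
  also have "\<dots> \<le> Kp * Lg * s + Kp * Lg * s" by (intro add_mono Xf_diff[OF u s] mf_diff[OF s])
  also have "\<dots> = 2 * (Kp * Lg * s)" by simp
  finally show ?thesis .
qed

definition Cphi :: real where "Cphi = 8 * (1 + Kp) * (Kp * Lg)"

lemma Phi_diff: assumes "0 \<le> s" shows "\<bar>Phi s i y a b - Phi 0 i y a b\<bar> \<le> Cphi * s"
proof -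
  have eq: "Phi s i y a b - Phi 0 i y a b = (\<Sum>j\<in>UNIV. \<Sum>u\<in>Vsteps. P i j * p i y u *
      ((Xf s j u y - mf s i y) $ a * (Xf s j u y - mf s i y) $ b - (Xf 0 j u y - mf 0 i y) $ a * (Xf 0 j u y - mf 0 i y) $ b))"
    unfolding Phi_def by (simp only: sum_subtractf[symmetric] right_diff_distrib)
  have bd: "\<bar>\<Sum>j\<in>UNIV. \<Sum>u\<in>Vsteps. P i j * p i y u *
      ((Xf s j u y - mf s i y) $ a * (Xf s j u y - mf s i y) $ b - (Xf 0 j u y - mf 0 i y) $ a * (Xf 0 j u y - mf 0 i y) $ b)\<bar> \<le> 2 * (2 * (1 + Kp)) * (2 * (Kp * Lg * s))"
    by (rule wsum_abs, rule comp_prod_bound[OF Z_norm Z_norm Z_diff[OF _ assms]]; assumption)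
  have c: "2 * (2 * (1 + Kp)) * (2 * (Kp * Lg * s)) = Cphi * s" unfolding Cphi_def by algebra
  show ?thesis unfolding eq using bd unfolding c .
qed

lemma Cphi_nonneg: "0 \<le> Cphi" by (simp add: Cphi_def Kp_nonneg Lg_nonneg)

end


lemma meas_XY:
  fixes Z :: "'w \<Rightarrow> 'e::finite" and f :: "'e \<Rightarrow> 'a::topological_space \<Rightarrow> 'b::topological_space"
  assumes "Z \<in> measurable M (count_space UNIV)" "Y \<in> borel_measurable M" "\<And>i. continuous_on UNIV (f i)"
  shows "(\<lambda>\<omega>. f (Z \<omega>) (Y \<omega>)) \<in> borel_measurable M"
proof (rule measurable_compose_countable[where f="\<lambda>i \<omega>. f i (Y \<omega>)", OF _ assms(1)])
  fix i
  show "(\<lambda>\<omega>. f i (Y \<omega>)) \<in> borel_measurable M"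
    by (rule measurable_compose[OF assms(2) borel_measurable_continuous_onI[OF assms(3)]])
qed

lemma meas_Y:
  fixes f :: "'a::topological_space \<Rightarrow> 'b::topological_space"
  assumes "Y \<in> borel_measurable M" "continuous_on UNIV f"
  shows "(\<lambda>\<omega>. f (Y \<omega>)) \<in> borel_measurable M"
  by (rule measurable_compose[OF assms(1) borel_measurable_continuous_onI[OF assms(2)]])

locale proc = model P \<mu> p for P :: "'e::finite \<Rightarrow> 'e \<Rightarrow> real" and \<mu>
    and p :: "'e \<Rightarrow> real^'d \<Rightarrow> real^'d \<Rightarrow> real" +
  fixes N :: "'w measure" and m :: nat and X :: "nat \<Rightarrow> 'w \<Rightarrow> 'e" and Jn :: "nat \<Rightarrow> 'w \<Rightarrow> real^'d"
  assumes probN: "prob_space N" and m1: "1 \<le> m"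
    and X_meas: "\<And>n. X n \<in> measurable N (count_space UNIV)"
    and J_meas: "\<And>n. Jn n \<in> borel_measurable N"
    and J_V: "\<And>n \<omega>. \<omega> \<in> space N \<Longrightarrow> Jn n \<omega> \<in> Vsteps"
    and trans: "\<And>n k u. u \<in> Vsteps \<Longrightarrow>
       AE \<omega> in N. real_cond_exp N (filt N X Jn n)
          (indicator {w \<in> space N. X (Suc n) w = k \<and> Jn (Suc n) w = u}) \<omega>
        = P (X n \<omega>) k * p (X n \<omega>) ((1 / real m) *\<^sub>R Spos Jn n \<omega>) u"
begin

sublocale N: prob_space N by (rule probN)

abbreviation F :: "nat \<Rightarrow> 'w measure" where "F n \<equiv> filt N X Jn n"

definition G :: "nat \<Rightarrow> 'w set set" where
  "G n = {X i -` A \<inter> space N | A i. i \<le> n} \<union> {Jn i -` B \<inter> space N | B i. i \<le> n \<and> B \<in> sets borel}"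

definition yy :: "nat \<Rightarrow> 'w \<Rightarrow> real^'d" where
  "yy n \<omega> = (1 / real m) *\<^sub>R Spos Jn n \<omega>"

lemma G_sets: "G n \<subseteq> sets N"
proof
  fix S assume "S \<in> G n"
  then show "S \<in> sets N" unfolding G_def
  proof (elim UnE CollectE exE conjE)
    fix A i assume "S = X i -` A \<inter> space N"
    then show ?thesis using measurable_sets[OF X_meas, of A i] by simp
  next
    fix B i assume "S = Jn i -` B \<inter> space N" "B \<in> sets borel"
    then show ?thesis using measurable_sets[OF J_meas, of B i] by simp
  qed
qed

lemma G_Pow: "G n \<subseteq> Pow (space N)"
  using G_sets sets.sets_into_space by blast

lemma space_F [simp]: "space (F n) = space N"
  unfolding filt_def G_def[symmetric] by (simp add: space_measure_of_conv)

lemma sets_F: "sets (F n) = sigma_sets (space N) (G n)"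
  unfolding filt_def G_def[symmetric] using G_Pow by (simp add: sets_measure_of_conv)

lemma subalg: "subalgebra N (F n)"
  unfolding subalgebra_def sets_F using sets.sigma_sets_subset[OF G_sets] by simp

lemma G_mono: assumes "k \<le> n" shows "G k \<subseteq> G n"
proof
  fix S assume "S \<in> G k"
  then show "S \<in> G n" unfolding G_def
  proof (elim UnE CollectE exE conjE)
    fix A i assume "S = X i -` A \<inter> space N" "i \<le> k"
    then show "S \<in> {X i -` A \<inter> space N | A i. i \<le> n} \<union> {Jn i -` B \<inter> space N | B i. i \<le> n \<and> B \<in> sets borel}"
    proof -
      have "i \<le> n" using \<open>i \<le> k\<close> assms by linarith
      then show ?thesis using \<open>S = X i -` A \<inter> space N\<close> by blast
    qed
  next
    fix B i assume "S = Jn i -` B \<inter> space N" "i \<le> k" "B \<in> sets borel"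
    then show "S \<in> {X i -` A \<inter> space N | A i. i \<le> n} \<union> {Jn i -` B \<inter> space N | B i. i \<le> n \<and> B \<in> sets borel}"
    proof -
      have "i \<le> n" using \<open>i \<le> k\<close> assms by linarith
      then show ?thesis using \<open>S = Jn i -` B \<inter> space N\<close> \<open>B \<in> sets borel\<close> by blast
    qed
  qed
qed

lemma subalg_F: "k \<le> n \<Longrightarrow> subalgebra (F n) (F k)"
  unfolding subalgebra_def sets_F using sigma_sets_subseteq[OF G_mono] by simp

lemma X_F: "i \<le> n \<Longrightarrow> X i \<in> measurable (F n) (count_space UNIV)"
proof (rule measurableI)
  fix A assume "i \<le> n"
  then have "X i -` A \<inter> space N \<in> G n" unfolding G_def by blast
  then show "X i -` A \<inter> space (F n) \<in> sets (F n)" unfolding sets_F by auto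
qed auto

lemma J_F: "i \<le> n \<Longrightarrow> Jn i \<in> borel_measurable (F n)"
proof (rule measurableI)
  fix B :: "(real^'d) set" assume "i \<le> n" "B \<in> sets borel"
  then have "Jn i -` B \<inter> space N \<in> G n" unfolding G_def by blast
  then show "Jn i -` B \<inter> space (F n) \<in> sets (F n)" unfolding sets_F by auto
qed auto

lemma yy_F: "yy n \<in> borel_measurable (F n)"
  unfolding yy_def Spos_def
  by (intro borel_measurable_scaleR borel_measurable_const borel_measurable_sum J_F) auto

lemma F_N: "f \<in> measurable (F n) M' \<Longrightarrow> f \<in> measurable N M'"
  by (rule measurable_from_subalg[OF subalg])

lemma F_F: "k \<le> n \<Longrightarrow> f \<in> measurable (F k) M' \<Longrightarrow> f \<in> measurable (F n) M'"
  by (rule measurable_from_subalg[OF subalg_F])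

lemma Fsf: "sigma_finite_subalgebra N (F n)"
proof -
  have "finite_measure_subalgebra N (F n)"
    unfolding finite_measure_subalgebra_def finite_measure_subalgebra_axioms_def
    using N.finite_measure_axioms subalg by simp
  then show ?thesis by (rule finite_measure_subalgebra_is_sigma_finite)
qed

lemma yy_Suc: "yy (Suc n) \<omega> = yy n \<omega> + (1 / real m) *\<^sub>R Jn (Suc n) \<omega>"
  unfolding yy_def Spos_def by (simp add: scaleR_add_right)

lemma yy_0: "yy 0 \<omega> = 0"
  unfolding yy_def Spos_def by simp

lemma ce_step:
  fixes \<phi> :: "'e \<Rightarrow> real^'d \<Rightarrow> 'w \<Rightarrow> real"
  assumes meas: "\<And>j u. u \<in> Vsteps \<Longrightarrow> \<phi> j u \<in> borel_measurable (F n)"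
    and bnd: "\<And>j u \<omega>. u \<in> Vsteps \<Longrightarrow> \<omega> \<in> space N \<Longrightarrow> \<bar>\<phi> j u \<omega>\<bar> \<le> B"
  shows "AE \<omega> in N. real_cond_exp N (F n) (\<lambda>\<omega>. \<phi> (X (Suc n) \<omega>) (Jn (Suc n) \<omega>) \<omega>) \<omega>
           = (\<Sum>j\<in>UNIV. \<Sum>u\<in>Vsteps. P (X n \<omega>) j * p (X n \<omega>) (yy n \<omega>) u * \<phi> j u \<omega>)"
proof -
  interpret S: sigma_finite_subalgebra N "F n" by (rule Fsf)
  define A where "A j u = {w \<in> space N. X (Suc n) w = j \<and> Jn (Suc n) w = u}" for j u
  have A_sets: "A j u \<in> sets N" for j u
  proof -
    have "A j u = (X (Suc n) -` {j} \<inter> space N) \<inter> (Jn (Suc n) -` {u} \<inter> space N)"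
      unfolding A_def by auto
    also have "\<dots> \<in> sets N"
      using measurable_sets[OF X_meas, of "{j}" "Suc n"] measurable_sets[OF J_meas, of "{u}" "Suc n"] by auto
    finally show ?thesis .
  qed
  define T where "T = (\<lambda>(j, u) \<omega>. \<phi> j u \<omega> * indicator (A j u) \<omega>)"
  have T_int: "integrable N (T ju)" for ju
  proof (cases ju)
    case (Pair j u)
    show ?thesis
    proof (cases "u \<in> Vsteps")
      case True
      show ?thesis unfolding Pair T_def case_prod_conv
      proof (rule N.integrable_const_bound[where B=B])
        show "AE x in N. norm (\<phi> j u x * indicator (A j u) x) \<le> B"
        proof (intro AE_I2)
          fix x assume x: "x \<in> space N"
          have b: "\<bar>\<phi> j u x\<bar> \<le> B" by (rule bnd[OF True x])
          then have "0 \<le> B" using abs_ge_zero[of "\<phi> j u x"] by linarith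
          then show "norm (\<phi> j u x * indicator (A j u) x) \<le> B" using b by (auto simp: indicator_def)
        qed
        show "(\<lambda>x. \<phi> j u x * indicator (A j u) x) \<in> borel_measurable N"
          using F_N[OF meas[OF True]] A_sets by measurable
      qed
    next
      case False
      have "integrable N (\<lambda>x. 0::real)" by simp
      moreover have "\<And>x. x \<in> space N \<Longrightarrow> T (j, u) x = 0"
        using False J_V by (auto simp: T_def A_def indicator_def)
      ultimately show ?thesis unfolding Pair using Bochner_Integration.integrable_cong[of N N "T (j,u)" "\<lambda>x. 0"] by simp
    qed
  qed
  have eqsp: "\<phi> (X (Suc n) \<omega>) (Jn (Suc n) \<omega>) \<omega> = (\<Sum>ju\<in>UNIV \<times> Vsteps. T ju \<omega>)" if \<omega>: "\<omega> \<in> space N" for \<omega>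
  proof -
    define j0 where "j0 = X (Suc n) \<omega>"
    define u0 where "u0 = Jn (Suc n) \<omega>"
    have u0: "u0 \<in> Vsteps" using J_V[OF \<omega>] by (simp add: u0_def)
    have "(\<Sum>ju\<in>UNIV \<times> Vsteps. T ju \<omega>) = (\<Sum>ju\<in>UNIV \<times> Vsteps. if ju = (j0, u0) then \<phi> j0 u0 \<omega> else 0)"
      by (rule sum.cong) (auto simp: T_def A_def indicator_def \<omega> j0_def u0_def)
    also have "\<dots> = \<phi> j0 u0 \<omega>" using u0 by (simp add: Vsteps_finite)
    finally show ?thesis by (simp add: j0_def u0_def)
  qed
  have lhs_meas: "(\<lambda>\<omega>. \<phi> (X (Suc n) \<omega>) (Jn (Suc n) \<omega>) \<omega>) \<in> borel_measurable N"
  proof -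
    have "(\<lambda>\<omega>. \<Sum>ju\<in>UNIV \<times> Vsteps. T ju \<omega>) \<in> borel_measurable N"
      using T_int by (intro borel_measurable_sum) (auto intro: borel_measurable_integrable)
    then show ?thesis using eqsp by (subst measurable_cong) auto
  qed
  have ae1: "AE \<omega> in N. real_cond_exp N (F n) (\<lambda>\<omega>. \<phi> (X (Suc n) \<omega>) (Jn (Suc n) \<omega>) \<omega>) \<omega>
     = real_cond_exp N (F n) (\<lambda>\<omega>. \<Sum>ju\<in>UNIV \<times> Vsteps. T ju \<omega>) \<omega>"
    by (rule S.real_cond_exp_cong) (use eqsp lhs_meas T_int in \<open>auto intro!: AE_I2 borel_measurable_sum borel_measurable_integrable\<close>)
  have ae2: "AE \<omega> in N. real_cond_exp N (F n) (\<lambda>\<omega>. \<Sum>ju\<in>UNIV \<times> Vsteps. T ju \<omega>) \<omega>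
      = (\<Sum>ju\<in>UNIV \<times> Vsteps. real_cond_exp N (F n) (T ju) \<omega>)"
    by (rule S.real_cond_exp_sum[OF T_int])
  have ae3: "AE \<omega> in N. \<forall>ju\<in>UNIV \<times> Vsteps. real_cond_exp N (F n) (T ju) \<omega>
      = (case ju of (j, u) \<Rightarrow> \<phi> j u \<omega> * (P (X n \<omega>) j * p (X n \<omega>) (yy n \<omega>) u))"
  proof (rule AE_finite_allI)
    show "finite ((UNIV::'e set) \<times> (Vsteps::(real^'d) set))" by (simp add: Vsteps_finite)
    fix ju assume "ju \<in> (UNIV::'e set) \<times> (Vsteps::(real^'d) set)"
    then obtain j u where ju: "ju = (j, u)" "u \<in> Vsteps" by auto
    have m1: "AE \<omega> in N. real_cond_exp N (F n) (T ju) \<omega> = \<phi> j u \<omega> * real_cond_exp N (F n) (indicator (A j u)) \<omega>"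
      using T_int[of "(j,u)"] unfolding ju T_def case_prod_conv
      by (intro S.real_cond_exp_mult meas[OF ju(2)] borel_measurable_indicator A_sets)
    have m2: "AE \<omega> in N. real_cond_exp N (F n) (indicator (A j u)) \<omega> = P (X n \<omega>) j * p (X n \<omega>) (yy n \<omega>) u"
      unfolding A_def yy_def by (rule trans[OF ju(2)])
    show "AE \<omega> in N. real_cond_exp N (F n) (T ju) \<omega>
      = (case ju of (j, u) \<Rightarrow> \<phi> j u \<omega> * (P (X n \<omega>) j * p (X n \<omega>) (yy n \<omega>) u))"
      using m1 m2 by eventually_elim (simp add: ju)
  qed
  show ?thesis
  proof (rule AE_mp[OF ae1, OF AE_mp[OF ae2, OF AE_mp[OF ae3]]], intro AE_I2 impI)
    fix \<omega>
    assume h3: "\<forall>ju\<in>UNIV \<times> Vsteps. real_cond_exp N (F n) (T ju) \<omega>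
      = (case ju of (j, u) \<Rightarrow> \<phi> j u \<omega> * (P (X n \<omega>) j * p (X n \<omega>) (yy n \<omega>) u))"
      and h2: "real_cond_exp N (F n) (\<lambda>\<omega>. \<Sum>ju\<in>UNIV \<times> Vsteps. T ju \<omega>) \<omega>
      = (\<Sum>ju\<in>UNIV \<times> Vsteps. real_cond_exp N (F n) (T ju) \<omega>)"
      and h1: "real_cond_exp N (F n) (\<lambda>\<omega>. \<phi> (X (Suc n) \<omega>) (Jn (Suc n) \<omega>) \<omega>) \<omega>
     = real_cond_exp N (F n) (\<lambda>\<omega>. \<Sum>ju\<in>UNIV \<times> Vsteps. T ju \<omega>) \<omega>"
    have "(\<Sum>ju\<in>UNIV \<times> Vsteps. real_cond_exp N (F n) (T ju) \<omega>)
        = (\<Sum>ju\<in>UNIV \<times> Vsteps. case ju of (j, u) \<Rightarrow> \<phi> j u \<omega> * (P (X n \<omega>) j * p (X n \<omega>) (yy n \<omega>) u))"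
      by (rule sum.cong) (use h3 in auto)
    also have "\<dots> = (\<Sum>j\<in>UNIV. \<Sum>u\<in>Vsteps. P (X n \<omega>) j * p (X n \<omega>) (yy n \<omega>) u * \<phi> j u \<omega>)"
      by (simp add: sum.cartesian_product[symmetric] mult_ac)
    finally show "real_cond_exp N (F n) (\<lambda>\<omega>. \<phi> (X (Suc n) \<omega>) (Jn (Suc n) \<omega>) \<omega>) \<omega>
           = (\<Sum>j\<in>UNIV. \<Sum>u\<in>Vsteps. P (X n \<omega>) j * p (X n \<omega>) (yy n \<omega>) u * \<phi> j u \<omega>)"
      using h1 h2 by simp
  qed
qed

end


lemma quart_bound:
  fixes M t c :: real
  assumes t: "\<bar>t\<bar> \<le> c"
  shows "(M + t) ^ 4 \<le> M ^ 4 + 4 * M ^ 3 * t + 8 * c\<^sup>2 * M\<^sup>2 + 3 * c ^ 4"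
proof -
  have c0: "0 \<le> c" using t by linarith
  have e: "(M + t) ^ 4 = M ^ 4 + 4 * M ^ 3 * t + 6 * (M\<^sup>2 * t\<^sup>2) + 4 * (M * t ^ 3) + t ^ 4"
    by algebra
  have t2: "t\<^sup>2 \<le> c\<^sup>2" using t by (metis abs_le_square_iff abs_of_nonneg c0)
  have t3: "\<bar>t\<bar> ^ 3 \<le> c ^ 3" using t by (intro power_mono) auto
  have t4: "t ^ 4 \<le> c ^ 4"
  proof -
    have "\<bar>t\<bar> ^ 4 \<le> c ^ 4" using t by (intro power_mono) auto
    then show ?thesis by (simp add: power_abs[symmetric])
  qed
  have a: "M\<^sup>2 * t\<^sup>2 \<le> M\<^sup>2 * c\<^sup>2" using t2 by (intro mult_left_mono) auto
  have b: "M * t ^ 3 \<le> \<bar>M\<bar> * c ^ 3"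
  proof -
    have "M * t ^ 3 \<le> \<bar>M * t ^ 3\<bar>" by simp
    also have "\<dots> = \<bar>M\<bar> * \<bar>t\<bar> ^ 3" by (simp add: abs_mult power_abs)
    also have "\<dots> \<le> \<bar>M\<bar> * c ^ 3" using t3 by (intro mult_left_mono) auto
    finally show ?thesis .
  qed
  have d: "2 * (\<bar>M\<bar> * c) \<le> M\<^sup>2 + c\<^sup>2"
  proof -
    have "0 \<le> (\<bar>M\<bar> - c)\<^sup>2" by simp
    then show ?thesis by (simp add: power2_eq_square algebra_simps)
  qed
  have d2: "4 * (\<bar>M\<bar> * c ^ 3) \<le> 2 * c\<^sup>2 * (M\<^sup>2 + c\<^sup>2)"
  proof -
    have "4 * (\<bar>M\<bar> * c ^ 3) = 2 * c\<^sup>2 * (2 * (\<bar>M\<bar> * c))" by (simp add: power2_eq_square power3_eq_cube)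
    also have "\<dots> \<le> 2 * c\<^sup>2 * (M\<^sup>2 + c\<^sup>2)" using d by (intro mult_left_mono) auto
    finally show ?thesis .
  qed
  have "(M + t) ^ 4 \<le> M ^ 4 + 4 * M ^ 3 * t + 6 * (M\<^sup>2 * c\<^sup>2) + 2 * c\<^sup>2 * (M\<^sup>2 + c\<^sup>2) + c ^ 4"
    unfolding e using a b d2 t4 by linarith
  also have "\<dots> = M ^ 4 + 4 * M ^ 3 * t + 8 * c\<^sup>2 * M\<^sup>2 + 3 * c ^ 4"
    by algebra
  finally show ?thesis .
qed

lemma (in prob_space) int_bnd:
  fixes f :: "'a \<Rightarrow> real"
  assumes "f \<in> borel_measurable M" "\<And>x. x \<in> space M \<Longrightarrow> \<bar>f x\<bar> \<le> C"
  shows "integrable M f"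
  by (rule integrable_const_bound[where B=C]) (use assms in \<open>auto intro!: AE_I2\<close>)

locale procG = proc P \<mu> p N m X Jn
  for P :: "'e::finite \<Rightarrow> 'e \<Rightarrow> real" and \<mu> and p :: "'e \<Rightarrow> real^'d \<Rightarrow> real^'d \<Rightarrow> real"
    and N :: "'w measure" and m X Jn +
  fixes h :: "'e \<Rightarrow> real^'d \<Rightarrow> real" and Bh Lh :: real
  assumes h_cent: "\<And>y. (\<Sum>i\<in>UNIV. \<mu> i * h i y) = 0"
    and h_bnd: "\<And>i y. \<bar>h i y\<bar> \<le> Bh"
    and h_lip: "\<And>i x y. \<bar>h i x - h i y\<bar> \<le> Lh * norm (x - y)"
    and Lh0: "0 \<le> Lh"
begin

lemma Bh0: "0 \<le> Bh" using h_bnd[of undefined 0] by linarith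

lemma hc: "centered (\<lambda>j. h j y)"
  unfolding centered_def using h_cent[of y] by simp

definition wf :: "'e \<Rightarrow> real^'d \<Rightarrow> real" where "wf i y = pois (\<lambda>j. h j y) i"

lemma wf_bnd: "\<bar>wf i y\<bar> \<le> Kp * Bh"
  using pois_bound[OF hc, where B=Bh and i=i] h_bnd by (simp add: wf_def)

lemma wf_lip: "\<bar>wf i x - wf i y\<bar> \<le> Kp * Lh * norm (x - y)"
proof -
  have "wf i x - wf i y = pois (\<lambda>j. h j x - h j y) i"
    unfolding wf_def by (rule pois_diff[OF hc hc])
  also have "\<bar>\<dots>\<bar> \<le> Kp * (Lh * norm (x - y))"
    using pois_bound[OF centered_diff[OF hc hc], where B="Lh * norm (x - y)" and i=i] h_lip by simp
  finally show ?thesis by (simp add: mult.assoc)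
qed

lemma wf_eq: "wf i y = h i y + (\<Sum>k\<in>UNIV. P i k * wf k y)"
  using pois_eq[OF hc, where i=i] by (simp add: wf_def)

lemma wf_cont: "continuous_on UNIV (wf i)"
proof -
  have "(Kp * Lh)-lipschitz_on UNIV (wf i)"
    by (intro lipschitz_onI) (auto simp: dist_norm dist_real_def wf_lip Kp_nonneg Lh0)
  then show ?thesis by (rule lipschitz_on_continuous_on)
qed

lemma wf_shift_cont: "continuous_on UNIV (\<lambda>y. wf j (y + c *\<^sub>R u))"
  by (rule continuous_on_compose2[OF wf_cont]) (auto intro!: continuous_intros)

definition cwG :: "'e \<Rightarrow> real^'d \<Rightarrow> real" where
  "cwG i y = (\<Sum>j\<in>UNIV. \<Sum>u\<in>Vsteps. P i j * p i y u * wf j (y + (1 / real m) *\<^sub>R u))"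

lemma cwG_cont: "continuous_on UNIV (cwG i)"
  unfolding cwG_def
  by (intro continuous_on_sum continuous_on_mult continuous_on_const p_cont wf_shift_cont) auto

definition cw :: "nat \<Rightarrow> 'w \<Rightarrow> real" where "cw k \<omega> = cwG (X k \<omega>) (yy k \<omega>)"

definition Dd :: "nat \<Rightarrow> 'w \<Rightarrow> real" where
  "Dd k \<omega> = wf (X (Suc k) \<omega>) (yy (Suc k) \<omega>) - cw k \<omega>"

definition Mn :: "nat \<Rightarrow> 'w \<Rightarrow> real" where "Mn n \<omega> = (\<Sum>k<n. Dd k \<omega>)"

definition cc :: real where "cc = 2 * Kp * Bh"

lemma cc0: "0 \<le> cc" by (simp add: cc_def Kp_nonneg Bh0)

lemma cw_meas: "cw k \<in> borel_measurable (F k)"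
  unfolding cw_def by (rule meas_XY[OF X_F yy_F cwG_cont]) simp

lemma Dd_meas: "Dd k \<in> borel_measurable (F (Suc k))"
proof -
  have "(\<lambda>\<omega>. wf (X (Suc k) \<omega>) (yy (Suc k) \<omega>)) \<in> borel_measurable (F (Suc k))"
    by (rule meas_XY[OF X_F yy_F wf_cont]) simp
  moreover have "cw k \<in> borel_measurable (F (Suc k))" by (rule F_F[OF _ cw_meas]) simp
  ultimately show ?thesis unfolding Dd_def by (rule borel_measurable_diff)
qed

lemma cw_bnd: "\<bar>cw k \<omega>\<bar> \<le> Kp * Bh"
  unfolding cw_def cwG_def by (rule wsum_abs) (rule wf_bnd)

lemma Dd_bnd: "\<bar>Dd k \<omega>\<bar> \<le> cc"
  using wf_bnd[of "X (Suc k) \<omega>" "yy (Suc k) \<omega>"] cw_bnd[of k \<omega>] unfolding Dd_def cc_def by linarith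

lemma Mn_meas: "Mn n \<in> borel_measurable (F n)"
  unfolding Mn_def by (intro borel_measurable_sum F_F[OF _ Dd_meas]) auto

lemma Mn_bnd: "\<bar>Mn n \<omega>\<bar> \<le> cc * n"
proof -
  have "\<bar>Mn n \<omega>\<bar> \<le> (\<Sum>k<n. \<bar>Dd k \<omega>\<bar>)" unfolding Mn_def by (rule sum_abs)
  also have "\<dots> \<le> (\<Sum>k<n. cc)" by (rule sum_mono) (rule Dd_bnd)
  finally show ?thesis by (simp add: mult.commute)
qed

lemma Mn_Suc: "Mn (Suc n) \<omega> = Mn n \<omega> + Dd n \<omega>"
  by (simp add: Mn_def)

lemma Dd_orth:
  assumes Zm: "Z \<in> borel_measurable (F k)" and Zb: "\<And>\<omega>. \<omega> \<in> space N \<Longrightarrow> \<bar>Z \<omega>\<bar> \<le> C"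
  shows "(\<integral>\<omega>. Z \<omega> * Dd k \<omega> \<partial>N) = 0"
proof -
  interpret S: sigma_finite_subalgebra N "F k" by (rule Fsf)
  define W where "W \<omega> = wf (X (Suc k) \<omega>) (yy (Suc k) \<omega>)" for \<omega>
  have W_eq: "W = (\<lambda>\<omega>. (\<lambda>j u \<omega>. wf j (yy k \<omega> + (1 / real m) *\<^sub>R u)) (X (Suc k) \<omega>) (Jn (Suc k) \<omega>) \<omega>)"
    by (simp add: W_def yy_Suc fun_eq_iff)
  have ce: "AE \<omega> in N. real_cond_exp N (F k) W \<omega> = cw k \<omega>"
  proof -
    have "AE \<omega> in N. real_cond_exp N (F k) W \<omega>
      = (\<Sum>j\<in>UNIV. \<Sum>u\<in>Vsteps. P (X k \<omega>) j * p (X k \<omega>) (yy k \<omega>) u * wf j (yy k \<omega> + (1 / real m) *\<^sub>R u))"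
      unfolding W_eq
    proof (rule ce_step)
      fix j and u :: "real^'d"
      show "(\<lambda>\<omega>. wf j (yy k \<omega> + (1 / real m) *\<^sub>R u)) \<in> borel_measurable (F k)"
        by (rule meas_Y[OF yy_F wf_shift_cont])
      fix \<omega> show "\<bar>wf j (yy k \<omega> + (1 / real m) *\<^sub>R u)\<bar> \<le> Kp * Bh" by (rule wf_bnd)
    qed
    then show ?thesis by (simp add: cw_def cwG_def)
  qed
  have W_meas: "W \<in> borel_measurable N"
    unfolding W_def by (rule F_N[OF meas_XY[OF X_F yy_F wf_cont]]) simp
  have ZN: "Z \<in> borel_measurable N" by (rule F_N[OF Zm])
  have cwN: "cw k \<in> borel_measurable N" by (rule F_N[OF cw_meas])
  have C0: "0 \<le> C" if "\<omega> \<in> space N" for \<omega> using Zb[OF that] by linarith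
  have int1: "integrable N (\<lambda>\<omega>. Z \<omega> * W \<omega>)"
  proof (rule N.int_bnd[where C="C * (Kp * Bh)"])
    show "(\<lambda>\<omega>. Z \<omega> * W \<omega>) \<in> borel_measurable N" using ZN W_meas by measurable
    fix \<omega> assume "\<omega> \<in> space N"
    then show "\<bar>Z \<omega> * W \<omega>\<bar> \<le> C * (Kp * Bh)"
      unfolding abs_mult W_def using Zb wf_bnd C0 by (intro mult_mono) auto
  qed
  have int2: "integrable N (\<lambda>\<omega>. Z \<omega> * cw k \<omega>)"
  proof (rule N.int_bnd[where C="C * (Kp * Bh)"])
    show "(\<lambda>\<omega>. Z \<omega> * cw k \<omega>) \<in> borel_measurable N" using ZN cwN by measurable
    fix \<omega> assume "\<omega> \<in> space N"
    then show "\<bar>Z \<omega> * cw k \<omega>\<bar> \<le> C * (Kp * Bh)"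
      unfolding abs_mult using Zb cw_bnd C0 by (intro mult_mono) auto
  qed
  have "(\<integral>\<omega>. Z \<omega> * W \<omega> \<partial>N) = (\<integral>\<omega>. Z \<omega> * real_cond_exp N (F k) W \<omega> \<partial>N)"
    by (rule S.real_cond_exp_intg(2)[symmetric, OF int1 Zm W_meas])
  also have "\<dots> = (\<integral>\<omega>. Z \<omega> * cw k \<omega> \<partial>N)"
    by (rule integral_cong_AE) (use ce ZN cwN in auto)
  finally have "(\<integral>\<omega>. Z \<omega> * W \<omega> \<partial>N) = (\<integral>\<omega>. Z \<omega> * cw k \<omega> \<partial>N)" .
  moreover have "(\<integral>\<omega>. Z \<omega> * Dd k \<omega> \<partial>N) = (\<integral>\<omega>. Z \<omega> * W \<omega> \<partial>N) - (\<integral>\<omega>. Z \<omega> * cw k \<omega> \<partial>N)"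
    unfolding Dd_def W_def[symmetric] right_diff_distrib by (rule Bochner_Integration.integral_diff[OF int1 int2])
  ultimately show ?thesis by simp
qed


lemma intb: "(f::'w \<Rightarrow> real) \<in> borel_measurable N \<Longrightarrow> (\<And>\<omega>. \<bar>f \<omega>\<bar> \<le> C) \<Longrightarrow> integrable N f"
  by (rule N.int_bnd) auto

lemma Dd_N: "Dd k \<in> borel_measurable N" by (rule F_N[OF Dd_meas])
lemma Mn_N: "Mn n \<in> borel_measurable N" by (rule F_N[OF Mn_meas])

lemma Mn_pow_bnd: "\<bar>Mn n \<omega> ^ k\<bar> \<le> (cc * n) ^ k"
  unfolding power_abs by (intro power_mono Mn_bnd) simp

lemma Mn_pow_int: "integrable N (\<lambda>\<omega>. Mn n \<omega> ^ k)"
  by (rule intb[OF _ Mn_pow_bnd]) (use Mn_N in measurable)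

lemma Mn_pow_Dd_int: "integrable N (\<lambda>\<omega>. Mn n \<omega> ^ k * Dd j \<omega>)"
proof (rule intb[where C="(cc * n) ^ k * cc"])
  show "(\<lambda>\<omega>. Mn n \<omega> ^ k * Dd j \<omega>) \<in> borel_measurable N" using Mn_N Dd_N by measurable
  fix \<omega> show "\<bar>Mn n \<omega> ^ k * Dd j \<omega>\<bar> \<le> (cc * n) ^ k * cc"
    unfolding abs_mult using cc0 by (intro mult_mono Mn_pow_bnd Dd_bnd) auto
qed

lemma Dd_sq_int: "integrable N (\<lambda>\<omega>. (Dd j \<omega>)\<^sup>2)"
proof (rule intb[where C="cc\<^sup>2"])
  show "(\<lambda>\<omega>. (Dd j \<omega>)\<^sup>2) \<in> borel_measurable N" using Dd_N by measurable
  fix \<omega>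
  have "\<bar>Dd j \<omega>\<bar>\<^sup>2 \<le> cc\<^sup>2" by (intro power_mono Dd_bnd) simp
  then show "\<bar>(Dd j \<omega>)\<^sup>2\<bar> \<le> cc\<^sup>2" by simp
qed

lemma Mn_pow_Dd_orth: "(\<integral>\<omega>. Mn n \<omega> ^ k * Dd n \<omega> \<partial>N) = 0"
proof (rule Dd_orth)
  show "(\<lambda>\<omega>. Mn n \<omega> ^ k) \<in> borel_measurable (F n)" using Mn_meas by measurable
  show "\<bar>Mn n \<omega> ^ k\<bar> \<le> (cc * n) ^ k" for \<omega> by (rule Mn_pow_bnd)
qed

lemma mom2: "(\<integral>\<omega>. (Mn n \<omega>)\<^sup>2 \<partial>N) \<le> cc\<^sup>2 * n"
proof (induction n)
  case 0
  then show ?case by (simp add: Mn_def)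
next
  case (Suc n)
  have e: "(Mn (Suc n) \<omega>)\<^sup>2 = (Mn n \<omega>)\<^sup>2 + 2 * (Mn n \<omega> ^ 1 * Dd n \<omega>) + (Dd n \<omega>)\<^sup>2" for \<omega>
    by (simp add: Mn_Suc power2_eq_square algebra_simps)
  have "(\<integral>\<omega>. (Mn (Suc n) \<omega>)\<^sup>2 \<partial>N) = (\<integral>\<omega>. (Mn n \<omega>)\<^sup>2 \<partial>N) + 2 * (\<integral>\<omega>. Mn n \<omega> ^ 1 * Dd n \<omega> \<partial>N) + (\<integral>\<omega>. (Dd n \<omega>)\<^sup>2 \<partial>N)"
    unfolding e using Mn_pow_int[of n 2] Mn_pow_Dd_int[of n 1 n] Dd_sq_int[of n] by simp
  also have "\<dots> = (\<integral>\<omega>. (Mn n \<omega>)\<^sup>2 \<partial>N) + (\<integral>\<omega>. (Dd n \<omega>)\<^sup>2 \<partial>N)"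
    using Mn_pow_Dd_orth[of n 1] by simp
  finally have e2: "(\<integral>\<omega>. (Mn (Suc n) \<omega>)\<^sup>2 \<partial>N) = (\<integral>\<omega>. (Mn n \<omega>)\<^sup>2 \<partial>N) + (\<integral>\<omega>. (Dd n \<omega>)\<^sup>2 \<partial>N)" .
  have d2: "(\<integral>\<omega>. (Dd n \<omega>)\<^sup>2 \<partial>N) \<le> cc\<^sup>2"
  proof (rule N.integral_le_const[OF Dd_sq_int], intro AE_I2)
    fix \<omega>
    have "\<bar>Dd n \<omega>\<bar>\<^sup>2 \<le> cc\<^sup>2" by (intro power_mono Dd_bnd) simp
    then show "(Dd n \<omega>)\<^sup>2 \<le> cc\<^sup>2" by simp
  qed
  have "cc\<^sup>2 * real n + cc\<^sup>2 = cc\<^sup>2 * real (Suc n)" by (simp add: algebra_simps)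
  then show ?case unfolding e2 using Suc d2 by linarith
qed

lemma mom4: "(\<integral>\<omega>. Mn n \<omega> ^ 4 \<partial>N) \<le> 4 * cc ^ 4 * (real n ^ 2 + n)"
proof (induction n)
  case 0
  then show ?case by (simp add: Mn_def)
next
  case (Suc n)
  have pt: "Mn (Suc n) \<omega> ^ 4 \<le> Mn n \<omega> ^ 4 + 4 * (Mn n \<omega> ^ 3 * Dd n \<omega>) + 8 * cc\<^sup>2 * (Mn n \<omega>)\<^sup>2 + 3 * cc ^ 4" for \<omega>
    unfolding Mn_Suc using quart_bound[OF Dd_bnd, of "Mn n \<omega>" n \<omega>] by (simp add: mult.assoc)
  have int_r: "integrable N (\<lambda>\<omega>. Mn n \<omega> ^ 4 + 4 * (Mn n \<omega> ^ 3 * Dd n \<omega>) + 8 * cc\<^sup>2 * (Mn n \<omega>)\<^sup>2 + 3 * cc ^ 4)"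
    using Mn_pow_int[of n 4] Mn_pow_Dd_int[of n 3 n] Mn_pow_int[of n 2] by simp
  have "(\<integral>\<omega>. Mn (Suc n) \<omega> ^ 4 \<partial>N) \<le> (\<integral>\<omega>. Mn n \<omega> ^ 4 + 4 * (Mn n \<omega> ^ 3 * Dd n \<omega>) + 8 * cc\<^sup>2 * (Mn n \<omega>)\<^sup>2 + 3 * cc ^ 4 \<partial>N)"
    by (rule integral_mono[OF Mn_pow_int int_r pt])
  also have "\<dots> = (\<integral>\<omega>. Mn n \<omega> ^ 4 \<partial>N) + 4 * (\<integral>\<omega>. Mn n \<omega> ^ 3 * Dd n \<omega> \<partial>N) + 8 * cc\<^sup>2 * (\<integral>\<omega>. (Mn n \<omega>)\<^sup>2 \<partial>N) + 3 * cc ^ 4"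
    using Mn_pow_int[of n 4] Mn_pow_Dd_int[of n 3 n] Mn_pow_int[of n 2] N.prob_space by simp
  also have "\<dots> = (\<integral>\<omega>. Mn n \<omega> ^ 4 \<partial>N) + 8 * cc\<^sup>2 * (\<integral>\<omega>. (Mn n \<omega>)\<^sup>2 \<partial>N) + 3 * cc ^ 4"
    using Mn_pow_Dd_orth[of n 3] by simp
  also have "\<dots> \<le> 4 * cc ^ 4 * (real n ^ 2 + n) + 8 * cc\<^sup>2 * (cc\<^sup>2 * n) + 3 * cc ^ 4"
    using Suc mom2[of n] cc0 by (intro add_mono mult_left_mono) auto
  also have "\<dots> \<le> 4 * cc ^ 4 * (real (Suc n) ^ 2 + Suc n)"
  proof -
    have "4 * cc ^ 4 * (real n ^ 2 + n) + 8 * cc\<^sup>2 * (cc\<^sup>2 * n) + 3 * cc ^ 4 = cc ^ 4 * (4 * real n ^ 2 + 12 * n + 3)"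
      by (simp add: algebra_simps power2_eq_square power4_eq_xxxx)
    also have "\<dots> \<le> cc ^ 4 * (4 * real n ^ 2 + 12 * n + 8)" using cc0 by (intro mult_left_mono) auto
    also have "\<dots> = 4 * cc ^ 4 * (real (Suc n) ^ 2 + Suc n)"
      by (simp add: algebra_simps power2_eq_square)
    finally show ?thesis .
  qed
  finally show ?case .
qed

lemma tail1:
  assumes lam: "0 < lam"
  shows "measure N {\<omega>\<in>space N. lam < \<bar>Mn n \<omega>\<bar>} \<le> 4 * cc ^ 4 * (real n ^ 2 + n) / lam ^ 4"
proof -
  have sub: "{\<omega>\<in>space N. lam < \<bar>Mn n \<omega>\<bar>} \<subseteq> {\<omega>\<in>space N. lam ^ 4 \<le> Mn n \<omega> ^ 4}"
  proof safe
    fix \<omega> assume "lam < \<bar>Mn n \<omega>\<bar>"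
    then have "lam ^ 4 \<le> \<bar>Mn n \<omega>\<bar> ^ 4" using lam by (intro power_mono) auto
    then show "lam ^ 4 \<le> Mn n \<omega> ^ 4" by simp
  qed
  have "{\<omega>\<in>space N. lam ^ 4 \<le> Mn n \<omega> ^ 4} \<in> sets N" using Mn_N by measurable
  then have "measure N {\<omega>\<in>space N. lam < \<bar>Mn n \<omega>\<bar>} \<le> measure N {\<omega>\<in>space N. lam ^ 4 \<le> Mn n \<omega> ^ 4}"
    by (rule N.finite_measure_mono[OF sub])
  also have "\<dots> \<le> (\<integral>\<omega>. Mn n \<omega> ^ 4 \<partial>N) / lam ^ 4"
    by (rule integral_Markov_inequality_measure[OF Mn_pow_int, where A="space N"]) (use lam in auto)
  also have "\<dots> \<le> 4 * cc ^ 4 * (real n ^ 2 + n) / lam ^ 4"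
    using lam by (intro divide_right_mono mom4) auto
  finally show ?thesis .
qed

lemma tailK_eq: "{\<omega>\<in>space N. \<exists>n\<le>K. lam < \<bar>Mn n \<omega>\<bar>} = (\<Union>n\<in>{..K}. {\<omega>\<in>space N. lam < \<bar>Mn n \<omega>\<bar>})"
  by auto

lemma tail_ms: "{\<omega>\<in>space N. lam < \<bar>Mn n \<omega>\<bar>} \<in> sets N" using Mn_N by measurable

lemma tailK_sets: "{\<omega>\<in>space N. \<exists>n\<le>K. lam < \<bar>Mn n \<omega>\<bar>} \<in> sets N"
  unfolding tailK_eq using tail_ms by auto

lemma tailK:
  assumes lam: "0 < lam"
  shows "measure N {\<omega>\<in>space N. \<exists>n\<le>K. lam < \<bar>Mn n \<omega>\<bar>} \<le> real (K + 1) * (4 * cc ^ 4 * (real K ^ 2 + K)) / lam ^ 4"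
proof -
  have "measure N {\<omega>\<in>space N. \<exists>n\<le>K. lam < \<bar>Mn n \<omega>\<bar>} \<le> (\<Sum>n\<in>{..K}. measure N {\<omega>\<in>space N. lam < \<bar>Mn n \<omega>\<bar>})"
    unfolding tailK_eq by (rule measure_UNION_le) (auto intro: tail_ms)
  also have "\<dots> \<le> (\<Sum>n\<in>{..K}. 4 * cc ^ 4 * (real K ^ 2 + K) / lam ^ 4)"
  proof (rule sum_mono)
    fix n assume "n \<in> {..K}"
    then have nK: "real n \<le> real K" by simp
    have "measure N {\<omega>\<in>space N. lam < \<bar>Mn n \<omega>\<bar>} \<le> 4 * cc ^ 4 * (real n ^ 2 + n) / lam ^ 4" by (rule tail1[OF lam])
    also have "\<dots> \<le> 4 * cc ^ 4 * (real K ^ 2 + K) / lam ^ 4"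
      using lam cc0 nK by (intro divide_right_mono mult_left_mono add_mono power_mono) auto
    finally show "measure N {\<omega>\<in>space N. lam < \<bar>Mn n \<omega>\<bar>} \<le> 4 * cc ^ 4 * (real K ^ 2 + K) / lam ^ 4" .
  qed
  also have "\<dots> = real (K + 1) * (4 * cc ^ 4 * (real K ^ 2 + K)) / lam ^ 4" by simp
  finally show ?thesis .
qed

lemma PW_err: "\<bar>cw k \<omega> - (\<Sum>j\<in>UNIV. P (X k \<omega>) j * wf j (yy k \<omega>))\<bar> \<le> Kp * Lh / real m"
proof -
  define i where "i = X k \<omega>"
  define y where "y = yy k \<omega>"
  have "(\<Sum>j\<in>UNIV. P i j * wf j y) = (\<Sum>j\<in>UNIV. \<Sum>u\<in>Vsteps. P i j * p i y u * wf j y)"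
    by (simp add: sum_distrib_left[symmetric] sum_distrib_right[symmetric] p_sum mult.commute mult.left_commute)
  then have "cw k \<omega> - (\<Sum>j\<in>UNIV. P i j * wf j y)
     = (\<Sum>j\<in>UNIV. \<Sum>u\<in>Vsteps. P i j * p i y u * (wf j (y + (1 / real m) *\<^sub>R u) - wf j y))"
    by (simp add: cw_def cwG_def i_def y_def right_diff_distrib sum_subtractf)
  also have "\<bar>\<dots>\<bar> \<le> Kp * Lh / real m"
  proof (rule wsum_abs)
    fix j and u :: "real^'d" assume u: "u \<in> Vsteps"
    have "\<bar>wf j (y + (1 / real m) *\<^sub>R u) - wf j y\<bar> \<le> Kp * Lh * norm ((1 / real m) *\<^sub>R u)"
      using wf_lip[of j "y + (1 / real m) *\<^sub>R u" y] by simp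
    also have "\<dots> = Kp * Lh / real m" using Vsteps_norm[OF u] m1 by simp
    finally show "\<bar>wf j (y + (1 / real m) *\<^sub>R u) - wf j y\<bar> \<le> Kp * Lh / real m" .
  qed
  finally show ?thesis by (simp add: i_def y_def)
qed

lemma decomp: "\<bar>\<Sum>k<n. h (X k \<omega>) (yy k \<omega>)\<bar> \<le> \<bar>Mn n \<omega>\<bar> + real n * (Kp * Lh / real m) + 2 * Kp * Bh"
proof -
  define W where "W k = wf (X k \<omega>) (yy k \<omega>)" for k
  define E where "E k = cw k \<omega> - (\<Sum>j\<in>UNIV. P (X k \<omega>) j * wf j (yy k \<omega>))" for k
  have hk: "h (X k \<omega>) (yy k \<omega>) = (W k - W (Suc k)) + Dd k \<omega> + E k" for k
    using wf_eq[of "X k \<omega>" "yy k \<omega>"] by (simp add: W_def E_def Dd_def)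
  have "(\<Sum>k<n. h (X k \<omega>) (yy k \<omega>)) = (\<Sum>k<n. W k - W (Suc k)) + Mn n \<omega> + (\<Sum>k<n. E k)"
    unfolding hk Mn_def by (simp add: sum.distrib)
  also have "(\<Sum>k<n. W k - W (Suc k)) = W 0 - W n" by (rule sum_lessThan_telescope')
  finally have e: "(\<Sum>k<n. h (X k \<omega>) (yy k \<omega>)) = W 0 - W n + Mn n \<omega> + (\<Sum>k<n. E k)" .
  have "\<bar>\<Sum>k<n. E k\<bar> \<le> (\<Sum>k<n. \<bar>E k\<bar>)" by (rule sum_abs)
  also have "\<dots> \<le> (\<Sum>k<n. Kp * Lh / real m)" by (rule sum_mono) (unfold E_def, rule PW_err)
  finally have Eb: "\<bar>\<Sum>k<n. E k\<bar> \<le> real n * (Kp * Lh / real m)" by simp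
  have Wb: "\<bar>W k\<bar> \<le> Kp * Bh" for k unfolding W_def by (rule wf_bnd)
  show ?thesis unfolding e using Eb Wb[of 0] Wb[of n] by linarith
qed

lemma G_tail:
  assumes lam: "0 < lam"
  shows "measure N {\<omega>\<in>space N. \<exists>n\<le>K. lam + real n * (Kp * Lh / real m) + 2 * Kp * Bh < \<bar>\<Sum>k<n. h (X k \<omega>) (yy k \<omega>)\<bar>}
     \<le> real (K + 1) * (4 * cc ^ 4 * (real K ^ 2 + K)) / lam ^ 4"
proof -
  have "{\<omega>\<in>space N. \<exists>n\<le>K. lam + real n * (Kp * Lh / real m) + 2 * Kp * Bh < \<bar>\<Sum>k<n. h (X k \<omega>) (yy k \<omega>)\<bar>}
      \<subseteq> {\<omega>\<in>space N. \<exists>n\<le>K. lam < \<bar>Mn n \<omega>\<bar>}"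
    using decomp by (smt (verit, best) Collect_mono_iff)
  then have "measure N {\<omega>\<in>space N. \<exists>n\<le>K. lam + real n * (Kp * Lh / real m) + 2 * Kp * Bh < \<bar>\<Sum>k<n. h (X k \<omega>) (yy k \<omega>)\<bar>}
      \<le> measure N {\<omega>\<in>space N. \<exists>n\<le>K. lam < \<bar>Mn n \<omega>\<bar>}"
    by (rule N.finite_measure_mono[OF _ tailK_sets])
  also have "\<dots> \<le> real (K + 1) * (4 * cc ^ 4 * (real K ^ 2 + K)) / lam ^ 4" by (rule tailK[OF lam])
  finally show ?thesis .
qed

end


lemma comp_meas: "f \<in> borel_measurable M \<Longrightarrow> (\<lambda>w. f w $ c) \<in> borel_measurable M"
  for f :: "'w \<Rightarrow> real^'d"
  by (rule meas_Y) (auto intro: continuous_on_component continuous_on_id)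

context proc begin

lemma Xf_cont: "continuous_on UNIV (\<lambda>y. Xf s j u y)"
  unfolding Xf_def by (intro continuous_intros continuous_on_compose2[OF vcorr_cont]) auto

lemma mf_cont: "continuous_on UNIV (\<lambda>y. mf s i y)"
  unfolding mf_def by (intro continuous_on_sum continuous_on_scaleR continuous_on_mult continuous_on_const p_cont Xf_cont) auto

definition XV :: "nat \<Rightarrow> 'w \<Rightarrow> real^'d" where
  "XV n \<omega> = Xf (1 / real m) (X (Suc n) \<omega>) (Jn (Suc n) \<omega>) (yy n \<omega>)"

lemma XV_meas: "XV n \<in> borel_measurable N"
proof -
  have "(\<lambda>\<omega>. (\<lambda>j \<omega>. Jn (Suc n) \<omega> + vcorr P p j (yy n \<omega> + (1 / real m) *\<^sub>R Jn (Suc n) \<omega>)) (X (Suc n) \<omega>) \<omega>) \<in> borel_measurable N"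
  proof (rule measurable_compose_countable[OF _ X_meas])
    fix j
    have "(\<lambda>\<omega>. yy n \<omega> + (1 / real m) *\<^sub>R Jn (Suc n) \<omega>) \<in> borel_measurable N"
      using F_N[OF yy_F] J_meas by measurable
    then show "(\<lambda>\<omega>. Jn (Suc n) \<omega> + vcorr P p j (yy n \<omega> + (1 / real m) *\<^sub>R Jn (Suc n) \<omega>)) \<in> borel_measurable N"
      using J_meas meas_Y[OF _ vcorr_cont] by (intro borel_measurable_add) auto
  qed
  then show ?thesis unfolding XV_def Xf_def by simp
qed

lemma Yinc_eq: "Yinc P p m N X Jn (Suc n) \<omega> = XV n \<omega> - vcond_exp N (F n) (XV n) \<omega>"
proof -
  have "(\<lambda>w. Jn (Suc n) w + vcorr P p (X (Suc n) w) ((1 / real m) *\<^sub>R Spos Jn (Suc n) w)) = XV n"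
    by (rule ext) (simp add: XV_def Xf_def yy_Suc[unfolded yy_def] yy_def)
  note eq = this
  show ?thesis unfolding Yinc_def Let_def eq[symmetric] by simp
qed

lemma ce_XV: "AE \<omega> in N. real_cond_exp N (F n) (\<lambda>w. XV n w $ a) \<omega> = mf (1 / real m) (X n \<omega>) (yy n \<omega>) $ a"
proof -
  have "AE \<omega> in N. real_cond_exp N (F n) (\<lambda>w. (\<lambda>j u w. Xf (1 / real m) j u (yy n w) $ a) (X (Suc n) w) (Jn (Suc n) w) w) \<omega>
     = (\<Sum>j\<in>UNIV. \<Sum>u\<in>Vsteps. P (X n \<omega>) j * p (X n \<omega>) (yy n \<omega>) u * Xf (1 / real m) j u (yy n \<omega>) $ a)"
  proof (rule ce_step)
    fix j and u :: "real^'d"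
    show "(\<lambda>w. Xf (1 / real m) j u (yy n w) $ a) \<in> borel_measurable (F n)"
      by (rule meas_Y[OF yy_F]) (intro continuous_on_component Xf_cont)
    fix \<omega> assume "u \<in> Vsteps"
    then show "\<bar>Xf (1 / real m) j u (yy n \<omega>) $ a\<bar> \<le> 1 + Kp"
      using component_le_norm_cart Xf_norm order_trans by blast
  qed
  then show ?thesis by (simp add: XV_def mf_def)
qed

definition psi :: "nat \<Rightarrow> 'd \<Rightarrow> 'd \<Rightarrow> 'e \<Rightarrow> real^'d \<Rightarrow> 'w \<Rightarrow> real" where
  "psi n a b j u \<omega> = (Xf (1 / real m) j u (yy n \<omega>) - mf (1 / real m) (X n \<omega>) (yy n \<omega>)) $ a
      * (Xf (1 / real m) j u (yy n \<omega>) - mf (1 / real m) (X n \<omega>) (yy n \<omega>)) $ b"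

lemma psi_meas: "psi n a b j u \<in> borel_measurable (F n)"
  unfolding psi_def
  by (rule meas_XY[OF X_F yy_F, where f="\<lambda>i y. (Xf (1 / real m) j u y - mf (1 / real m) i y) $ a
      * (Xf (1 / real m) j u y - mf (1 / real m) i y) $ b"])
     (auto intro!: continuous_intros Xf_cont mf_cont)

lemma psi_bnd: "u \<in> Vsteps \<Longrightarrow> \<bar>psi n a b j u \<omega>\<bar> \<le> (2 * (1 + Kp)) * (2 * (1 + Kp))"
  unfolding psi_def abs_mult
  by (intro mult_mono order_trans[OF component_le_norm_cart Z_norm]) (auto simp: Kp_nonneg)

lemma bracket_ce1: "AE \<omega> in N. real_cond_exp N (F n)
    (\<lambda>w. Yinc P p m N X Jn (Suc n) w $ a * Yinc P p m N X Jn (Suc n) w $ b) \<omega>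
   = Phi (1 / real m) (X n \<omega>) (yy n \<omega>) a b"
proof -
  have Y_ae: "AE w in N. Yinc P p m N X Jn (Suc n) w $ a * Yinc P p m N X Jn (Suc n) w $ b
      = psi n a b (X (Suc n) w) (Jn (Suc n) w) w"
    using ce_XV[of n a] ce_XV[of n b]
    by eventually_elim (simp add: Yinc_eq vcond_exp_def psi_def XV_def)
  have Y_meas: "(\<lambda>w. Yinc P p m N X Jn (Suc n) w $ a * Yinc P p m N X Jn (Suc n) w $ b) \<in> borel_measurable N"
  proof -
    have comp: "(\<lambda>w. XV n w $ c) \<in> borel_measurable N" for c
      by (rule meas_Y[OF XV_meas]) (intro continuous_on_component continuous_on_id)
    have "(\<lambda>w. Yinc P p m N X Jn (Suc n) w $ a * Yinc P p m N X Jn (Suc n) w $ b)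
      = (\<lambda>w. (XV n w $ a - real_cond_exp N (F n) (\<lambda>w. XV n w $ a) w) * (XV n w $ b - real_cond_exp N (F n) (\<lambda>w. XV n w $ b) w))"
      by (simp add: Yinc_eq vcond_exp_def fun_eq_iff)
    then show ?thesis using comp[of a] comp[of b] by simp
  qed
  have psi_N: "(\<lambda>w. psi n a b (X (Suc n) w) (Jn (Suc n) w) w) \<in> borel_measurable N"
  proof -
    have "(\<lambda>w. psi n a b (X (Suc n) w) (Jn (Suc n) w) w) = (\<lambda>w. (XV n w - mf (1 / real m) (X n w) (yy n w)) $ a * (XV n w - mf (1 / real m) (X n w) (yy n w)) $ b)"
      by (simp add: psi_def XV_def)
    moreover have "(\<lambda>w. mf (1 / real m) (X n w) (yy n w)) \<in> borel_measurable N"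
      by (rule F_N[OF meas_XY[OF X_F yy_F mf_cont]]) simp
    ultimately show ?thesis using XV_meas
      by (simp del: Xf_def) (intro borel_measurable_times borel_measurable_diff comp_meas; assumption)
  qed
  interpret S: sigma_finite_subalgebra N "F n" by (rule Fsf)
  have c1: "AE \<omega> in N. real_cond_exp N (F n) (\<lambda>w. Yinc P p m N X Jn (Suc n) w $ a * Yinc P p m N X Jn (Suc n) w $ b) \<omega>
    = real_cond_exp N (F n) (\<lambda>w. psi n a b (X (Suc n) w) (Jn (Suc n) w) w) \<omega>"
    by (rule S.real_cond_exp_cong[OF Y_ae Y_meas psi_N])
  have c2: "AE \<omega> in N. real_cond_exp N (F n) (\<lambda>w. psi n a b (X (Suc n) w) (Jn (Suc n) w) w) \<omega>
    = (\<Sum>j\<in>UNIV. \<Sum>u\<in>Vsteps. P (X n \<omega>) j * p (X n \<omega>) (yy n \<omega>) u * psi n a b j u \<omega>)"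
    by (rule ce_step[OF psi_meas psi_bnd])
  show ?thesis using c1 c2 by eventually_elim (simp add: Phi_def psi_def)
qed

lemma bracket_ce: "AE \<omega> in N. \<forall>n a b. real_cond_exp N (F n)
    (\<lambda>w. Yinc P p m N X Jn (Suc n) w $ a * Yinc P p m N X Jn (Suc n) w $ b) \<omega>
   = Phi (1 / real m) (X n \<omega>) (yy n \<omega>) a b"
  by (simp add: AE_all_countable bracket_ce1)

end


context procG begin

lemma G_tail_set:
  assumes lam: "0 < lam"
  shows "\<exists>S\<in>sets N. {\<omega>\<in>space N. \<exists>n\<le>K. lam + real n * (Kp * Lh / real m) + 2 * Kp * Bh < \<bar>\<Sum>k<n. h (X k \<omega>) (yy k \<omega>)\<bar>} \<subseteq> S
     \<and> measure N S \<le> real (K + 1) * (4 * (2 * Kp * Bh) ^ 4 * (real K ^ 2 + K)) / lam ^ 4"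
proof (intro bexI conjI)
  show "{\<omega>\<in>space N. \<exists>n\<le>K. lam + real n * (Kp * Lh / real m) + 2 * Kp * Bh < \<bar>\<Sum>k<n. h (X k \<omega>) (yy k \<omega>)\<bar>}
      \<subseteq> {\<omega>\<in>space N. \<exists>n\<le>K. lam < \<bar>Mn n \<omega>\<bar>}"
    using decomp by (smt (verit, best) Collect_mono_iff)
  show "{\<omega>\<in>space N. \<exists>n\<le>K. lam < \<bar>Mn n \<omega>\<bar>} \<in> sets N" by (rule tailK_sets)
  show "measure N {\<omega>\<in>space N. \<exists>n\<le>K. lam < \<bar>Mn n \<omega>\<bar>} \<le> real (K + 1) * (4 * (2 * Kp * Bh) ^ 4 * (real K ^ 2 + K)) / lam ^ 4"
    using tailK[OF lam, of K] by (simp add: cc_def)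
qed

end

context proc begin

definition DK :: "nat \<Rightarrow> 'w \<Rightarrow> real^'d^'d" where
  "DK K \<omega> = (1 / (real m)^2) *\<^sub>R
     (\<Sum>k\<in>{1..K}.
        (\<chi> a b. real_cond_exp N (filt N X Jn (k - 1))
                  (\<lambda>w. Yinc P p m N X Jn k w $ a * Yinc P p m N X Jn k w $ b) \<omega>))
    - (1 / (real m)^2) *\<^sub>R (\<Sum>k\<in>{0..<K}. abar P \<mu> p ((1 / real m) *\<^sub>R Spos Jn k \<omega>))"

lemma DK_eq: "bracket P p m N X Jn t \<omega> - (1 / (real m)^2) *\<^sub>R (\<Sum>k\<in>{0..<nat \<lfloor>(real m)^2 * t\<rfloor>}.
                    abar P \<mu> p ((1 / real m) *\<^sub>R Spos Jn k \<omega>)) = DK (nat \<lfloor>(real m)^2 * t\<rfloor>) \<omega>"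
  unfolding DK_def bracket_def by simp

definition good :: "'w \<Rightarrow> bool" where
  "good \<omega> \<longleftrightarrow> (\<forall>n a b. real_cond_exp N (F n)
    (\<lambda>w. Yinc P p m N X Jn (Suc n) w $ a * Yinc P p m N X Jn (Suc n) w $ b) \<omega>
   = Phi (1 / real m) (X n \<omega>) (yy n \<omega>) a b)"

lemma good_ae: "AE \<omega> in N. good \<omega>"
  unfolding good_def by (rule bracket_ce)

lemma DK_good:
  assumes g: "good \<omega>"
  shows "DK K \<omega> = (1 / (real m)^2) *\<^sub>R (\<Sum>k<K. \<chi> a b. Phi (1 / real m) (X k \<omega>) (yy k \<omega>) a b - abar P \<mu> p (yy k \<omega>) $ a $ b)"
proof -
  have "(\<Sum>k\<in>{1..K}. (\<chi> a b. real_cond_exp N (filt N X Jn (k - 1))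
                  (\<lambda>w. Yinc P p m N X Jn k w $ a * Yinc P p m N X Jn k w $ b) \<omega>))
      = (\<Sum>k<K. (\<chi> a b. real_cond_exp N (F k)
                  (\<lambda>w. Yinc P p m N X Jn (Suc k) w $ a * Yinc P p m N X Jn (Suc k) w $ b) \<omega>))"
    using sum.atLeast1_atMost_eq[where g="\<lambda>k. (\<chi> a b. real_cond_exp N (filt N X Jn (k - 1))
                  (\<lambda>w. Yinc P p m N X Jn k w $ a * Yinc P p m N X Jn k w $ b) \<omega>)" and n=K] by simp
  also have "\<dots> = (\<Sum>k<K. (\<chi> a b. Phi (1 / real m) (X k \<omega>) (yy k \<omega>) a b))"
    using g unfolding good_def by simp
  finally have e1: "(\<Sum>k\<in>{1..K}. (\<chi> a b. real_cond_exp N (filt N X Jn (k - 1))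
                  (\<lambda>w. Yinc P p m N X Jn k w $ a * Yinc P p m N X Jn k w $ b) \<omega>))
      = (\<Sum>k<K. (\<chi> a b. Phi (1 / real m) (X k \<omega>) (yy k \<omega>) a b))" .
  have e2: "(\<Sum>k\<in>{0..<K}. abar P \<mu> p ((1 / real m) *\<^sub>R Spos Jn k \<omega>)) = (\<Sum>k<K. abar P \<mu> p (yy k \<omega>))"
    by (simp add: yy_def atLeast0LessThan)
  have e3: "(\<Sum>k<K. (\<chi> a b. Phi (1 / real m) (X k \<omega>) (yy k \<omega>) a b)) - (\<Sum>k<K. abar P \<mu> p (yy k \<omega>))
     = (\<Sum>k<K. \<chi> a b. Phi (1 / real m) (X k \<omega>) (yy k \<omega>) a b - abar P \<mu> p (yy k \<omega>) $ a $ b)"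
  proof -
    have "(\<chi> a b. Phi (1 / real m) (X k \<omega>) (yy k \<omega>) a b) - abar P \<mu> p (yy k \<omega>)
        = (\<chi> a b. Phi (1 / real m) (X k \<omega>) (yy k \<omega>) a b - abar P \<mu> p (yy k \<omega>) $ a $ b)" for k
      by (simp add: vec_eq_iff)
    then show ?thesis by (simp add: sum_subtractf[symmetric])
  qed
  show ?thesis unfolding DK_def e1 e2 scaleR_diff_right[symmetric] e3 ..
qed

lemma DK_entry:
  assumes g: "good \<omega>"
  shows "\<bar>DK K \<omega> $ a $ b\<bar> \<le> (real K * (Cphi / real m) + \<bar>\<Sum>k<K. hfun (X k \<omega>) (yy k \<omega>) a b\<bar>) / (real m)^2"
proof -
  have m0: "0 < real m" using m1 by simp
  define A where "A = (\<Sum>k<K. Phi (1 / real m) (X k \<omega>) (yy k \<omega>) a b - Phi 0 (X k \<omega>) (yy k \<omega>) a b)"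
  define H where "H = (\<Sum>k<K. hfun (X k \<omega>) (yy k \<omega>) a b)"
  have "DK K \<omega> $ a $ b = (1 / (real m)^2) * (\<Sum>k<K. Phi (1 / real m) (X k \<omega>) (yy k \<omega>) a b - abar P \<mu> p (yy k \<omega>) $ a $ b)"
    unfolding DK_good[OF g] by simp
  also have "(\<Sum>k<K. Phi (1 / real m) (X k \<omega>) (yy k \<omega>) a b - abar P \<mu> p (yy k \<omega>) $ a $ b) = A + H"
    unfolding A_def H_def sum.distrib[symmetric] by (rule sum.cong) (auto simp: hfun_def)
  finally have e: "DK K \<omega> $ a $ b = (A + H) / (real m)^2" by simp
  have "\<bar>A\<bar> \<le> (\<Sum>k<K. \<bar>Phi (1 / real m) (X k \<omega>) (yy k \<omega>) a b - Phi 0 (X k \<omega>) (yy k \<omega>) a b\<bar>)"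
    unfolding A_def by (rule sum_abs)
  also have "\<dots> \<le> (\<Sum>k<K. Cphi * (1 / real m))" by (rule sum_mono) (rule Phi_diff, simp)
  finally have Ab: "\<bar>A\<bar> \<le> real K * (Cphi / real m)" by simp
  have "\<bar>A + H\<bar> \<le> real K * (Cphi / real m) + \<bar>H\<bar>" using Ab abs_triangle_ineq[of A H] by linarith
  then have "\<bar>A + H\<bar> / (real m)^2 \<le> (real K * (Cphi / real m) + \<bar>H\<bar>) / (real m)^2"
    by (rule divide_right_mono) simp
  then show ?thesis unfolding e H_def by simp
qed

end


lemma norm_mat_le: "norm (A :: real^'d^'d) \<le> (\<Sum>a\<in>UNIV. \<Sum>b\<in>UNIV. \<bar>A $ a $ b\<bar>)"
proof -
  have "norm A \<le> (\<Sum>a\<in>UNIV. norm (A $ a))"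
    unfolding norm_vec_def by (rule L2_set_le_sum) simp
  also have "\<dots> \<le> (\<Sum>a\<in>UNIV. \<Sum>b\<in>UNIV. \<bar>A $ a $ b\<bar>)"
    by (rule sum_mono) (rule norm_le_l1_cart)
  finally show ?thesis .
qed

context proc begin

lemma event_bound:
  fixes eps T lam :: real and B L :: "'d \<Rightarrow> 'd \<Rightarrow> real" and Km :: nat
  assumes eps: "0 < eps" and T: "0 \<le> T"
    and hB: "\<And>a b i y. \<bar>hfun i y a b\<bar> \<le> B a b"
    and hL: "\<And>a b i x y. \<bar>hfun i x a b - hfun i y a b\<bar> \<le> L a b * norm (x - y)"
    and L0: "\<And>a b. 0 \<le> L a b"
    and Km: "Km = nat \<lfloor>(real m)^2 * T\<rfloor>"
    and lam: "lam = eps / (2 * real (CARD('d))^2) * (real m)^2 / 2"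
    and big1: "real (CARD('d))^2 * (T * (Cphi / real m)) \<le> eps / 2"
    and big2: "\<And>a b. real m * T * (Kp * L a b) + 2 * Kp * B a b \<le> lam"
  shows "measure N {\<omega> \<in> space N. eps < (SUP t\<in>{0..T}. norm (bracket P p m N X Jn t \<omega>
               - (1 / (real m)^2) *\<^sub>R (\<Sum>k\<in>{0..<nat \<lfloor>(real m)^2 * t\<rfloor>}.
                    abar P \<mu> p ((1 / real m) *\<^sub>R Spos Jn k \<omega>))))}
     \<le> (\<Sum>a\<in>UNIV. \<Sum>b\<in>UNIV. real (Km + 1) * (4 * (2 * Kp * B a b) ^ 4 * (real Km ^ 2 + Km)) / lam ^ 4)"
proof -
  define d2 where "d2 = real (CARD('d))^2"
  have d2pos: "0 < d2" by (simp add: d2_def)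
  have m0: "0 < real m" using m1 by simp
  have lam_pos: "0 < lam" unfolding lam using eps d2pos m0 by (simp add: d2_def)
  define Q where "Q a b S \<longleftrightarrow> S \<in> sets N \<and> {\<omega>\<in>space N. \<exists>n\<le>Km. lam + real n * (Kp * L a b / real m) + 2 * Kp * B a b < \<bar>\<Sum>k<n. hfun (X k \<omega>) (yy k \<omega>) a b\<bar>} \<subseteq> S
     \<and> measure N S \<le> real (Km + 1) * (4 * (2 * Kp * B a b) ^ 4 * (real Km ^ 2 + Km)) / lam ^ 4" for a b S
  have ex: "\<exists>S. Q a b S" for a b
  proof -
    interpret G: procG P \<mu> p N m X Jn "\<lambda>i y. hfun i y a b" "B a b" "L a b"
      by (intro procG.intro proc_axioms procG_axioms.intro proc.intro model_axioms model.intro mchain_axioms)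
         (auto simp: hfun_centered hB hL L0)
    show ?thesis unfolding Q_def using G.G_tail_set[OF lam_pos, of Km] by blast
  qed
  define S where "S a b = (SOME S. Q a b S)" for a b
  have QS: "Q a b (S a b)" for a b unfolding S_def by (rule someI_ex[OF ex])
  have S_sets: "S a b \<in> sets N" for a b using QS[of a b] by (simp add: Q_def)
  have S_sub: "{\<omega>\<in>space N. \<exists>n\<le>Km. lam + real n * (Kp * L a b / real m) + 2 * Kp * B a b < \<bar>\<Sum>k<n. hfun (X k \<omega>) (yy k \<omega>) a b\<bar>} \<subseteq> S a b" for a b
    using QS[of a b] by (simp add: Q_def)
  have S_meas: "measure N (S a b) \<le> real (Km + 1) * (4 * (2 * Kp * B a b) ^ 4 * (real Km ^ 2 + Km)) / lam ^ 4" for a b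
    using QS[of a b] by (simp add: Q_def)
  obtain Nul where Nul: "{\<omega>\<in>space N. \<not> good \<omega>} \<subseteq> Nul" "emeasure N Nul = 0" "Nul \<in> sets N"
    using good_ae by (rule AE_E)
  define U where "U = (\<Union>ab\<in>UNIV \<times> UNIV. S (fst ab) (snd ab))"
  have U_sets: "U \<in> sets N" unfolding U_def using S_sets by auto
  have KmT: "real Km \<le> (real m)^2 * T"
  proof -
    have "0 \<le> (real m)^2 * T" using T by simp
    then show ?thesis unfolding Km by linarith
  qed
  have sub: "{\<omega> \<in> space N. eps < (SUP t\<in>{0..T}. norm (bracket P p m N X Jn t \<omega>
               - (1 / (real m)^2) *\<^sub>R (\<Sum>k\<in>{0..<nat \<lfloor>(real m)^2 * t\<rfloor>}.
                    abar P \<mu> p ((1 / real m) *\<^sub>R Spos Jn k \<omega>))))} \<subseteq> Nul \<union> U"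
  proof
    fix \<omega> assume "\<omega> \<in> {\<omega> \<in> space N. eps < (SUP t\<in>{0..T}. norm (bracket P p m N X Jn t \<omega>
               - (1 / (real m)^2) *\<^sub>R (\<Sum>k\<in>{0..<nat \<lfloor>(real m)^2 * t\<rfloor>}.
                    abar P \<mu> p ((1 / real m) *\<^sub>R Spos Jn k \<omega>))))}"
    then have \<omega>: "\<omega> \<in> space N" and gt: "eps < (SUP t\<in>{0..T}. norm (DK (nat \<lfloor>(real m)^2 * t\<rfloor>) \<omega>))"
      unfolding DK_eq by auto
    show "\<omega> \<in> Nul \<union> U"
    proof (cases "good \<omega>")
      case False
      then show ?thesis using Nul(1) \<omega> by auto
    next
      case True
      have Kle: "nat \<lfloor>(real m)^2 * t\<rfloor> \<le> Km" if "t \<in> {0..T}" for t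
        unfolding Km using that by (intro nat_mono floor_mono mult_left_mono) auto
      have "(\<lambda>t. norm (DK (nat \<lfloor>(real m)^2 * t\<rfloor>) \<omega>)) ` {0..T} \<subseteq> (\<lambda>K. norm (DK K \<omega>)) ` {..Km}"
        using Kle by auto
      then have bdd: "bdd_above ((\<lambda>t. norm (DK (nat \<lfloor>(real m)^2 * t\<rfloor>) \<omega>)) ` {0..T})"
        by (rule bdd_above_mono[OF bdd_above_finite, rotated]) simp
      obtain t where t: "t \<in> {0..T}" and tgt: "eps < norm (DK (nat \<lfloor>(real m)^2 * t\<rfloor>) \<omega>)"
        using gt less_cSUP_iff[OF _ bdd] T by auto
      define K where "K = nat \<lfloor>(real m)^2 * t\<rfloor>"
      have KKm: "K \<le> Km" using Kle[OF t] by (simp add: K_def)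
      have KT: "real K \<le> (real m)^2 * T" using KKm KmT by linarith
      have "\<exists>a b. eps / d2 < \<bar>DK K \<omega> $ a $ b\<bar>"
      proof (rule ccontr)
        assume "\<not> ?thesis"
        then have le: "\<And>a b. \<bar>DK K \<omega> $ a $ b\<bar> \<le> eps / d2" by (simp add: not_less)
        have "norm (DK K \<omega>) \<le> (\<Sum>a\<in>(UNIV::'d set). \<Sum>b\<in>(UNIV::'d set). eps / d2)"
        proof -
          have "(\<Sum>a\<in>UNIV. \<Sum>b\<in>UNIV. \<bar>DK K \<omega> $ a $ b\<bar>) \<le> (\<Sum>a\<in>(UNIV::'d set). \<Sum>b\<in>(UNIV::'d set). eps / d2)"
            by (intro sum_mono) (simp add: le)
          then show ?thesis using norm_mat_le[of "DK K \<omega>"] by linarith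
        qed
        also have "\<dots> = eps" using d2pos by (simp add: d2_def power2_eq_square)
        finally show False using tgt by (simp add: K_def)
      qed
      then obtain a b where ab: "eps / d2 < \<bar>DK K \<omega> $ a $ b\<bar>" by blast
      define H where "H = \<bar>\<Sum>k<K. hfun (X k \<omega>) (yy k \<omega>) a b\<bar>"
      have e1: "\<bar>DK K \<omega> $ a $ b\<bar> \<le> (real K * (Cphi / real m) + H) / (real m)^2"
        unfolding H_def by (rule DK_entry[OF True])
      have e2: "real K * (Cphi / real m) / (real m)^2 \<le> T * (Cphi / real m)"
      proof -
        have "real K * (Cphi / real m) \<le> (real m)^2 * T * (Cphi / real m)"
          using KT Cphi_nonneg m0 by (intro mult_right_mono) auto
        then show ?thesis using m0 by (simp add: field_simps)
      qed
      have e3: "T * (Cphi / real m) \<le> eps / (2 * d2)"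
        using big1 d2pos by (simp add: d2_def field_simps)
      have "eps / d2 < real K * (Cphi / real m) / (real m)^2 + H / (real m)^2"
        using ab e1 by (simp add: add_divide_distrib)
      then have "eps / d2 - eps / (2 * d2) < H / (real m)^2" using e2 e3 by linarith
      moreover have "eps / d2 - eps / (2 * d2) = 2 * lam / (real m)^2"
        unfolding lam d2_def using m0 by (simp add: field_simps)
      ultimately have Hgt: "2 * lam < H" using m0 by (simp add: divide_less_cancel)
      have "real K * (Kp * L a b / real m) \<le> real m * T * (Kp * L a b)"
      proof -
        have "real K * (Kp * L a b / real m) \<le> (real m)^2 * T * (Kp * L a b / real m)"
          using KT Kp_nonneg L0[of a b] m0 by (intro mult_right_mono) auto
        also have "\<dots> = real m * T * (Kp * L a b)" using m0 by (simp add: field_simps power2_eq_square)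
        finally show ?thesis .
      qed
      then have "lam + real K * (Kp * L a b / real m) + 2 * Kp * B a b < H" using big2[of a b] Hgt by linarith
      then have "\<omega> \<in> S a b" using S_sub[of a b] \<omega> KKm unfolding H_def by blast
      then show ?thesis unfolding U_def by (intro UnI2 UN_I[of "(a, b)"]) auto
    qed
  qed
  have "measure N {\<omega> \<in> space N. eps < (SUP t\<in>{0..T}. norm (bracket P p m N X Jn t \<omega>
               - (1 / (real m)^2) *\<^sub>R (\<Sum>k\<in>{0..<nat \<lfloor>(real m)^2 * t\<rfloor>}.
                    abar P \<mu> p ((1 / real m) *\<^sub>R Spos Jn k \<omega>))))} \<le> measure N (Nul \<union> U)"
    by (rule N.finite_measure_mono[OF sub]) (use Nul U_sets in auto)
  also have "\<dots> = measure N U"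
    using measure_Un_null_set[OF U_sets, of Nul] Nul by (simp add: null_sets_def Un_commute)
  also have "\<dots> \<le> (\<Sum>ab\<in>UNIV \<times> UNIV. measure N (S (fst ab) (snd ab)))"
    unfolding U_def by (rule measure_UNION_le) (auto intro: S_sets)
  also have "\<dots> \<le> (\<Sum>ab\<in>UNIV \<times> UNIV. real (Km + 1) * (4 * (2 * Kp * B (fst ab) (snd ab)) ^ 4 * (real Km ^ 2 + Km)) / lam ^ 4)"
    by (rule sum_mono) (rule S_meas)
  also have "\<dots> = (\<Sum>a\<in>UNIV. \<Sum>b\<in>UNIV. real (Km + 1) * (4 * (2 * Kp * B a b) ^ 4 * (real Km ^ 2 + Km)) / lam ^ 4)"
    unfolding sum.cartesian_product by (simp add: split_def)
  finally show ?thesis .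
qed

end


lemma bound_arith:
  fixes x mm T c eps d2 :: real
  assumes x0: "0 \<le> x" and xT: "x \<le> mm^2 * T" and m1: "1 \<le> mm" and T0: "0 \<le> T" and e: "0 < eps" and d: "0 < d2"
  shows "(x + 1) * (4 * c^4 * (x^2 + x)) / (eps / (2 * d2) * mm^2 / 2)^4 \<le> 1024 * c^4 * (T+1)^3 * d2^4 / eps^4 / mm^2"
proof -
  have m2: "1 \<le> mm^2" using m1 by (simp add: one_le_power)
  have a: "x + 1 \<le> mm^2 * (T + 1)" using xT m2 by (simp add: algebra_simps)
  have b1: "x^2 \<le> (mm^2 * T)^2" using x0 xT by (intro power_mono) auto
  have b2: "x \<le> mm^2 * mm^2 * T"
  proof -
    have "mm^2 * T \<le> mm^2 * (mm^2 * T)" using mult_right_mono[OF m2, of "mm^2 * T"] T0 by simp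
    then show ?thesis using xT by (simp add: mult.assoc)
  qed
  have b: "x^2 + x \<le> mm^2 * mm^2 * (T + 1)^2"
  proof -
    have q: "0 \<le> mm^2 * mm^2 * (T + 1)" using T0 by simp
    have "(mm^2 * T)^2 + mm^2 * mm^2 * T \<le> mm^2 * mm^2 * (T + 1)^2"
      using q by (simp add: power2_eq_square algebra_simps)
    then show ?thesis using b1 b2 by linarith
  qed
  have c4: "0 \<le> 4 * c^4" by simp
  have "(x + 1) * (4 * c^4 * (x^2 + x)) \<le> (mm^2 * (T + 1)) * (4 * c^4 * (mm^2 * mm^2 * (T + 1)^2))"
    using a b x0 c4 by (intro mult_mono mult_left_mono) auto
  moreover have "0 < (eps / (2 * d2) * mm^2 / 2)^4" using e d m1 by simp
  ultimately have "(x + 1) * (4 * c^4 * (x^2 + x)) / (eps / (2 * d2) * mm^2 / 2)^4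
     \<le> (mm^2 * (T + 1)) * (4 * c^4 * (mm^2 * mm^2 * (T + 1)^2)) / (eps / (2 * d2) * mm^2 / 2)^4"
    by (rule divide_right_mono[OF _ less_imp_le])
  also have "\<dots> = 1024 * c^4 * (T+1)^3 * d2^4 / eps^4 / mm^2"
    using e d m1 by (simp add: field_simps power2_eq_square, algebra)
  finally show ?thesis .
qed

lemma lim_over_pow:
  assumes "0 < k"
  shows "((\<lambda>m::nat. c / (real m)^k) \<longlongrightarrow> 0) sequentially"
  by (rule tendsto_divide_0[OF tendsto_const filterlim_at_top_imp_at_infinity[OF filterlim_pow_at_top[OF assms filterlim_real_sequentially]]])

lemma BL_unif:
  fixes f :: "'e::finite \<Rightarrow> 'a::real_normed_vector \<Rightarrow> real"
  assumes BLf: "\<And>i. BL (f i)"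
  shows "\<exists>B L. 0 \<le> B \<and> 0 \<le> L \<and> (\<forall>i x. \<bar>f i x\<bar> \<le> B) \<and> (\<forall>i x y. \<bar>f i x - f i y\<bar> \<le> L * norm (x - y))"
proof -
  have "\<forall>i. \<exists>BL::real\<times>real. 0 \<le> fst BL \<and> 0 \<le> snd BL \<and> (\<forall>x. \<bar>f i x\<bar> \<le> fst BL) \<and> (\<forall>x y. \<bar>f i x - f i y\<bar> \<le> snd BL * norm (x - y))"
  proof
    fix i
    obtain B L where "0 \<le> B" "0 \<le> L" "\<And>x. \<bar>f i x\<bar> \<le> B" "\<And>x y. \<bar>f i x - f i y\<bar> \<le> L * norm (x - y)"
      using BLE[OF BLf[of i]] by blast
    then show "\<exists>BL::real\<times>real. 0 \<le> fst BL \<and> 0 \<le> snd BL \<and> (\<forall>x. \<bar>f i x\<bar> \<le> fst BL) \<and> (\<forall>x y. \<bar>f i x - f i y\<bar> \<le> snd BL * norm (x - y))"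
      by (intro exI[of _ "(B, L)"]) auto
  qed
  from choice[OF this] obtain g where g: "\<And>i. 0 \<le> fst (g i) \<and> 0 \<le> snd (g i) \<and> (\<forall>x. \<bar>f i x\<bar> \<le> fst (g i)) \<and> (\<forall>x y. \<bar>f i x - f i y\<bar> \<le> snd (g i) * norm (x - y))"
    by blast
  define B where "B = (\<Sum>i\<in>UNIV. fst (g i))"
  define L where "L = (\<Sum>i\<in>UNIV. snd (g i))"
  have Bi: "fst (g i) \<le> B" for i unfolding B_def by (rule member_le_sum) (use g in auto)
  have Li: "snd (g i) \<le> L" for i unfolding L_def by (rule member_le_sum) (use g in auto)
  have "0 \<le> B" unfolding B_def by (rule sum_nonneg) (use g in auto)
  moreover have "0 \<le> L" unfolding L_def by (rule sum_nonneg) (use g in auto)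
  moreover have "\<bar>f i x\<bar> \<le> B" for i x
  proof -
    have "\<bar>f i x\<bar> \<le> fst (g i)" using g[of i] by blast
    then show ?thesis using Bi[of i] by linarith
  qed
  moreover have "\<bar>f i x - f i y\<bar> \<le> L * norm (x - y)" for i x y
  proof -
    have "\<bar>f i x - f i y\<bar> \<le> snd (g i) * norm (x - y)" using g[of i] by auto
    also have "\<dots> \<le> L * norm (x - y)" by (rule mult_right_mono[OF Li]) simp
    finally show ?thesis .
  qed
  ultimately show ?thesis by blast
qed

lemma (in model) hfun_unif:
  "\<exists>B L. 0 \<le> B \<and> 0 \<le> L \<and> (\<forall>i y. \<bar>hfun i y a b\<bar> \<le> B) \<and> (\<forall>i x y. \<bar>hfun i x a b - hfun i y a b\<bar> \<le> L * norm (x - y))"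
  using BL_unif[of "\<lambda>i y. hfun i y a b"] hfun_BL by simp

theorem lemma4p4:
  fixes P :: "'e::finite \<Rightarrow> 'e \<Rightarrow> real"
    and \<mu> :: "'e \<Rightarrow> real"
    and p :: "'e \<Rightarrow> real^'d \<Rightarrow> real^'d \<Rightarrow> real"
    and M :: "nat \<Rightarrow> 'w measure"
    and \<xi> :: "nat \<Rightarrow> nat \<Rightarrow> 'w \<Rightarrow> 'e"
    and J :: "nat \<Rightarrow> nat \<Rightarrow> 'w \<Rightarrow> real^'d"
    and T :: real
  assumes P_stoch: "stochastic P"
    and P_irr: "irreducible_mat P"
    and P_aper: "aperiodic_mat P"
    and mu_inv: "invariant_prob P \<mu>"
    and p_nonneg: "\<And>k y u. 0 \<le> p k y u"
    and p_sum: "\<And>k y. (\<Sum>u\<in>Vsteps. p k y u) = 1"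
    and p_C2: "\<And>k u. u \<in> Vsteps \<Longrightarrow> C2_bdd_deriv (\<lambda>y. p k y u)"
    and centered: "\<And>y. (\<Sum>k\<in>UNIV. \<mu> k *\<^sub>R gdrift p k y) = 0"
    and M_prob: "\<And>m. m \<ge> 1 \<Longrightarrow> prob_space (M m)"
    and xi_meas: "\<And>m n. m \<ge> 1 \<Longrightarrow> \<xi> m n \<in> measurable (M m) (count_space UNIV)"
    and J_meas: "\<And>m n. m \<ge> 1 \<Longrightarrow> J m n \<in> borel_measurable (M m)"
    and J_V: "\<And>m n \<omega>. m \<ge> 1 \<Longrightarrow> \<omega> \<in> space (M m) \<Longrightarrow> J m n \<omega> \<in> Vsteps"
    and trans: "\<And>m n k u. m \<ge> 1 \<Longrightarrow> u \<in> Vsteps \<Longrightarrow>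
       AE \<omega> in M m. real_cond_exp (M m) (filt (M m) (\<xi> m) (J m) n)
          (indicator {w \<in> space (M m). \<xi> m (Suc n) w = k \<and> J m (Suc n) w = u}) \<omega>
        = P (\<xi> m n \<omega>) k * p (\<xi> m n \<omega>) ((1 / real m) *\<^sub>R Spos (J m) n \<omega>) u"
    and T_nonneg: "0 \<le> T"
  shows "\<forall>\<epsilon>>0. (\<lambda>m. measure (M m) {\<omega> \<in> space (M m).
            (SUP t\<in>{0..T}. norm (bracket P p m (M m) (\<xi> m) (J m) t \<omega>
               - (1 / (real m)^2) *\<^sub>R (\<Sum>k\<in>{0..<nat \<lfloor>(real m)^2 * t\<rfloor>}.
                    abar P \<mu> p ((1 / real m) *\<^sub>R Spos (J m) k \<omega>)))) > \<epsilon>})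
          \<longlonglongrightarrow> 0"
proof -
  interpret MO: model P \<mu> p
    by (intro model.intro mchain.intro model_axioms.intro P_stoch P_irr P_aper mu_inv p_nonneg p_sum p_C2 centered)
  show ?thesis
  proof (intro allI impI)
    fix eps :: real assume eps: "0 < eps"
    have "\<forall>ab::'d\<times>'d. \<exists>BL::real\<times>real. 0 \<le> fst BL \<and> 0 \<le> snd BL
      \<and> (\<forall>i y. \<bar>MO.hfun i y (fst ab) (snd ab)\<bar> \<le> fst BL)
      \<and> (\<forall>i x y. \<bar>MO.hfun i x (fst ab) (snd ab) - MO.hfun i y (fst ab) (snd ab)\<bar> \<le> snd BL * norm (x - y))"
    proof
      fix ab :: "'d \<times> 'd"
      obtain B L where "0 \<le> B" "0 \<le> L" "\<forall>i y. \<bar>MO.hfun i y (fst ab) (snd ab)\<bar> \<le> B"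
        "\<forall>i x y. \<bar>MO.hfun i x (fst ab) (snd ab) - MO.hfun i y (fst ab) (snd ab)\<bar> \<le> L * norm (x - y)"
        using MO.hfun_unif by blast
      then show "\<exists>BL::real\<times>real. 0 \<le> fst BL \<and> 0 \<le> snd BL
      \<and> (\<forall>i y. \<bar>MO.hfun i y (fst ab) (snd ab)\<bar> \<le> fst BL)
      \<and> (\<forall>i x y. \<bar>MO.hfun i x (fst ab) (snd ab) - MO.hfun i y (fst ab) (snd ab)\<bar> \<le> snd BL * norm (x - y))"
        by (intro exI[of _ "(B, L)"]) auto
    qed
    from choice[OF this] obtain g where g: "\<And>ab. 0 \<le> fst (g ab) \<and> 0 \<le> snd (g ab)
      \<and> (\<forall>i y. \<bar>MO.hfun i y (fst ab) (snd ab)\<bar> \<le> fst (g ab))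
      \<and> (\<forall>i x y. \<bar>MO.hfun i x (fst ab) (snd ab) - MO.hfun i y (fst ab) (snd ab)\<bar> \<le> snd (g ab) * norm (x - y))"
      by blast
    define B where "B a b = fst (g (a, b))" for a b
    define L where "L a b = snd (g (a, b))" for a b
    have hB: "\<And>a b i y. \<bar>MO.hfun i y a b\<bar> \<le> B a b" using g unfolding B_def by fastforce
    have hL: "\<And>a b i x y. \<bar>MO.hfun i x a b - MO.hfun i y a b\<bar> \<le> L a b * norm (x - y)"
      using g unfolding L_def by fastforce
    have L0: "\<And>a b. 0 \<le> L a b" using g unfolding L_def by fastforce
    define d2 where "d2 = real (CARD('d))^2"
    have d2pos: "0 < d2" by (simp add: d2_def)
    define C where "C = (\<Sum>a\<in>UNIV. \<Sum>b\<in>UNIV. 1024 * (2 * MO.Kp * B a b)^4 * (T+1)^3 * d2^4 / eps^4)"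
    have key: "measure (M m) {\<omega> \<in> space (M m).
            (SUP t\<in>{0..T}. norm (bracket P p m (M m) (\<xi> m) (J m) t \<omega>
               - (1 / (real m)^2) *\<^sub>R (\<Sum>k\<in>{0..<nat \<lfloor>(real m)^2 * t\<rfloor>}.
                    abar P \<mu> p ((1 / real m) *\<^sub>R Spos (J m) k \<omega>)))) > eps} \<le> C / (real m)^2"
      if m1: "1 \<le> m" and big1: "real (CARD('d))^2 * (T * (MO.Cphi / real m)) \<le> eps / 2"
        and big2: "\<forall>a b. real m * T * (MO.Kp * L a b) + 2 * MO.Kp * B a b \<le> eps / (2 * real (CARD('d))^2) * (real m)^2 / 2"
      for m
    proof -
      interpret PR: proc P \<mu> p "M m" m "\<xi> m" "J m"
        by (intro proc.intro proc_axioms.intro MO.model_axioms M_prob xi_meas J_meas J_V trans m1)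
      have "measure (M m) {\<omega> \<in> space (M m).
            eps < (SUP t\<in>{0..T}. norm (bracket P p m (M m) (\<xi> m) (J m) t \<omega>
               - (1 / (real m)^2) *\<^sub>R (\<Sum>k\<in>{0..<nat \<lfloor>(real m)^2 * t\<rfloor>}.
                    abar P \<mu> p ((1 / real m) *\<^sub>R Spos (J m) k \<omega>))))}
          \<le> (\<Sum>a\<in>UNIV. \<Sum>b\<in>UNIV. real (nat \<lfloor>(real m)^2 * T\<rfloor> + 1) * (4 * (2 * MO.Kp * B a b) ^ 4
               * (real (nat \<lfloor>(real m)^2 * T\<rfloor>) ^ 2 + nat \<lfloor>(real m)^2 * T\<rfloor>)) / (eps / (2 * real (CARD('d))^2) * (real m)^2 / 2) ^ 4)"
        by (rule PR.event_bound[OF eps T_nonneg hB hL L0 refl refl big1]) (use big2 in auto)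
      also have "\<dots> \<le> (\<Sum>a\<in>UNIV. \<Sum>b\<in>UNIV. 1024 * (2 * MO.Kp * B a b)^4 * (T+1)^3 * d2^4 / eps^4 / (real m)^2)"
      proof (intro sum_mono)
        fix a b
        define x where "x = real (nat \<lfloor>(real m)^2 * T\<rfloor>)"
        have x0: "0 \<le> x" by (simp add: x_def)
        have xT: "x \<le> (real m)^2 * T"
        proof -
          have "0 \<le> (real m)^2 * T" using T_nonneg by simp
          then show ?thesis unfolding x_def by linarith
        qed
        have "(x + 1) * (4 * (2 * MO.Kp * B a b)^4 * (x^2 + x)) / (eps / (2 * d2) * (real m)^2 / 2)^4
            \<le> 1024 * (2 * MO.Kp * B a b)^4 * (T+1)^3 * d2^4 / eps^4 / (real m)^2"
          by (rule bound_arith[OF x0 xT _ T_nonneg eps d2pos]) (use m1 in simp)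
        then show "real (nat \<lfloor>(real m)^2 * T\<rfloor> + 1) * (4 * (2 * MO.Kp * B a b) ^ 4
               * (real (nat \<lfloor>(real m)^2 * T\<rfloor>) ^ 2 + nat \<lfloor>(real m)^2 * T\<rfloor>)) / (eps / (2 * real (CARD('d))^2) * (real m)^2 / 2) ^ 4
            \<le> 1024 * (2 * MO.Kp * B a b)^4 * (T+1)^3 * d2^4 / eps^4 / (real m)^2"
          unfolding x_def d2_def by (simp add: add.commute)
      qed
      also have "\<dots> = C / (real m)^2" unfolding C_def by (simp add: sum_divide_distrib)
      finally show ?thesis by (simp add: less_eq_real_def)
    qed
    have ev1: "eventually (\<lambda>m. real (CARD('d))^2 * (T * (MO.Cphi / real m)) \<le> eps / 2) sequentially"
    proof -
      have "((\<lambda>m. real (CARD('d))^2 * (T * (MO.Cphi / real m))) \<longlongrightarrow> 0) sequentially"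
      proof -
        have e: "(\<lambda>m. real (CARD('d))^2 * (T * (MO.Cphi / real m))) = (\<lambda>m. (real (CARD('d))^2 * T * MO.Cphi) / real m)"
          by (rule ext) simp
        show ?thesis unfolding e by (rule lim_const_over_n)
      qed
      from order_tendstoD(2)[OF this, of "eps / 2"] eps show ?thesis
        by (auto elim: eventually_mono)
    qed
    have ev2: "eventually (\<lambda>m. \<forall>a b. real m * T * (MO.Kp * L a b) + 2 * MO.Kp * B a b \<le> eps / (2 * real (CARD('d))^2) * (real m)^2 / 2) sequentially"
    proof (intro eventually_all_finite)
      fix a b
      have lim: "((\<lambda>m::nat. (T * (MO.Kp * L a b)) / (real m)^1 + (2 * MO.Kp * B a b) / (real m)^2) \<longlongrightarrow> 0) sequentially"
      proof -
        have l1: "((\<lambda>m::nat. (T * (MO.Kp * L a b)) / (real m)^1) \<longlongrightarrow> 0) sequentially" by (rule lim_over_pow) simp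
        have l2: "((\<lambda>m::nat. (2 * MO.Kp * B a b) / (real m)^2) \<longlongrightarrow> 0) sequentially" by (rule lim_over_pow) simp
        show ?thesis using tendsto_add[OF l1 l2] by simp
      qed
      have pos: "0 < eps / (2 * real (CARD('d))^2) / 2" using eps by simp
      have "eventually (\<lambda>m::nat. (T * (MO.Kp * L a b)) / (real m)^1 + (2 * MO.Kp * B a b) / (real m)^2 < eps / (2 * real (CARD('d))^2) / 2) sequentially"
        by (rule order_tendstoD(2)[OF lim pos])
      moreover have "eventually (\<lambda>m::nat. 1 \<le> m) sequentially" by simp
      ultimately show "eventually (\<lambda>m. real m * T * (MO.Kp * L a b) + 2 * MO.Kp * B a b \<le> eps / (2 * real (CARD('d))^2) * (real m)^2 / 2) sequentially"
      proof eventually_elim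
        case (elim m)
        then have m0: "0 < real m" by simp
        have "(T * (MO.Kp * L a b) / real m + 2 * MO.Kp * B a b / (real m)^2) * (real m)^2 \<le> eps / (2 * real (CARD('d))^2) / 2 * (real m)^2"
          using elim(1) m0 by (intro mult_right_mono) auto
        moreover have "(T * (MO.Kp * L a b) / real m + 2 * MO.Kp * B a b / (real m)^2) * (real m)^2
            = real m * T * (MO.Kp * L a b) + 2 * MO.Kp * B a b"
          using m0 by (simp add: field_simps power2_eq_square)
        moreover have "eps / (2 * real (CARD('d))^2) / 2 * (real m)^2 = eps / (2 * real (CARD('d))^2) * (real m)^2 / 2"
          by simp
        ultimately show ?case by linarith
      qed
    qed
    have ev: "eventually (\<lambda>m. measure (M m) {\<omega> \<in> space (M m).
            (SUP t\<in>{0..T}. norm (bracket P p m (M m) (\<xi> m) (J m) t \<omega>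
               - (1 / (real m)^2) *\<^sub>R (\<Sum>k\<in>{0..<nat \<lfloor>(real m)^2 * t\<rfloor>}.
                    abar P \<mu> p ((1 / real m) *\<^sub>R Spos (J m) k \<omega>)))) > eps} \<le> C / (real m)^2) sequentially"
      using ev1 ev2 eventually_ge_at_top[of 1] by eventually_elim (rule key)
    show "(\<lambda>m. measure (M m) {\<omega> \<in> space (M m).
            (SUP t\<in>{0..T}. norm (bracket P p m (M m) (\<xi> m) (J m) t \<omega>
               - (1 / (real m)^2) *\<^sub>R (\<Sum>k\<in>{0..<nat \<lfloor>(real m)^2 * t\<rfloor>}.
                    abar P \<mu> p ((1 / real m) *\<^sub>R Spos (J m) k \<omega>)))) > eps}) \<longlonglongrightarrow> 0"
      by (rule tendsto_sandwich[OF _ ev tendsto_const lim_over_pow]) auto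
  qed
qed


end
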